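(* Let $U$ be a finite group, $A$ an abelian normal subgroup of $U$ containing $U'$, $G=U/A$, and let $B=A\oplus I_G$ be the $\mathbb Z[G]$-module defined as follows: choose representatives $u_\sigma$ ($\sigma\in G$, $u_1=1$), put $a^\sigma=u_\sigma a u_\sigma^{-1}$, $a_{\sigma,\tau}=u_\sigma u_\tau u_{\sigma\tau}^{-1}$, write $A$ additively, and let $G$ act by $\sigma*a=a^\sigma$, $\sigma*(\tau-1)=a_{\sigma,\tau}+(\sigma\tau-\sigma)$. Let $\mathrm{Tr}_{B/A}=\sum_{\sigma\in G}\sigma$ acting on $B$. Then $$(A:U')\cdot \mathrm{Tr}_{B/A}(b)=0\quad\text{for all } b\in B.$$ In particular, if $A=U'$, the transfer $\mathrm{Ver}_{U/A}:U/U'\to A$ is trivial.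
   Context: $I_G$ is the augmentation ideal of $\mathbb Z[G]$; $\mathrm{Ver}_{U/A}$ is the group-theoretic transfer from $U$ to $A$. *)

theory Defs
  imports "HOL-Algebra.Algebra"
begin

text \<open>Setting: U a group, A an abelian normal subgroup, G = U Mod A (elements are
 cosets of A), r a choice of representatives r sigma in sigma with r A = 1.
 Elements of Z[G] are integer-valued functions on cosets supported on G.\<close>

definition augmentation_ideal :: "'a monoid \<Rightarrow> 'a set \<Rightarrow> ('a set \<Rightarrow> int) set" where
  "augmentation_ideal U A =
     {x. (\<forall>\<sigma>. \<sigma> \<notin> carrier (U Mod A) \<longrightarrow> x \<sigma> = 0) \<and> (\<Sum>\<sigma>\<in>carrier (U Mod A). x \<sigma>) = 0}"

definition modB :: "'a monoid \<Rightarrow> 'a set \<Rightarrow> ('a \<times> ('a set \<Rightarrow> int)) set" where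
  "modB U A = A \<times> augmentation_ideal U A"

abbreviation subA :: "'a monoid \<Rightarrow> 'a set \<Rightarrow> 'a monoid" where
  "subA U A \<equiv> U\<lparr>carrier := A\<rparr>"

definition cocycle :: "'a monoid \<Rightarrow> 'a set \<Rightarrow> ('a set \<Rightarrow> 'a) \<Rightarrow> 'a set \<Rightarrow> 'a set \<Rightarrow> 'a" where
  "cocycle U A r \<sigma> \<tau> = r \<sigma> \<otimes>\<^bsub>U\<^esub> r \<tau> \<otimes>\<^bsub>U\<^esub> inv\<^bsub>U\<^esub> (r (\<sigma> <#>\<^bsub>U\<^esub> \<tau>))"

text \<open>The action of sigma on B: sigma * (a + x) with x = sum_tau x(tau) (tau - 1) in I_G, i.e.
  sigma * a = a^sigma, sigma * (tau - 1) = a_{sigma,tau} + (sigma tau - sigma).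
  (The Z[G]-part is left multiplication by sigma; the A-part is written multiplicatively.)\<close>
definition actB :: "'a monoid \<Rightarrow> 'a set \<Rightarrow> ('a set \<Rightarrow> 'a) \<Rightarrow> 'a set
                   \<Rightarrow> 'a \<times> ('a set \<Rightarrow> int) \<Rightarrow> 'a \<times> ('a set \<Rightarrow> int)" where
  "actB U A r \<sigma> b =
     (r \<sigma> \<otimes>\<^bsub>U\<^esub> fst b \<otimes>\<^bsub>U\<^esub> inv\<^bsub>U\<^esub> (r \<sigma>) \<otimes>\<^bsub>U\<^esub>
        finprod (subA U A) (\<lambda>\<tau>. cocycle U A r \<sigma> \<tau> [^]\<^bsub>U\<^esub> snd b \<tau>) (carrier (U Mod A)),
      \<lambda>\<rho>. if \<rho> \<in> carrier (U Mod A) then snd b (inv\<^bsub>U Mod A\<^esub> \<sigma> \<otimes>\<^bsub>U Mod A\<^esub> \<rho>) else 0)"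

definition traceB :: "'a monoid \<Rightarrow> 'a set \<Rightarrow> ('a set \<Rightarrow> 'a)
                     \<Rightarrow> 'a \<times> ('a set \<Rightarrow> int) \<Rightarrow> 'a \<times> ('a set \<Rightarrow> int)" where
  "traceB U A r b =
     (finprod (subA U A) (\<lambda>\<sigma>. fst (actB U A r \<sigma> b)) (carrier (U Mod A)),
      \<lambda>\<rho>. \<Sum>\<sigma>\<in>carrier (U Mod A). snd (actB U A r \<sigma> b) \<rho>)"

definition smulB :: "'a monoid \<Rightarrow> int \<Rightarrow> 'a \<times> ('a set \<Rightarrow> int) \<Rightarrow> 'a \<times> ('a set \<Rightarrow> int)" where
  "smulB U n b = (fst b [^]\<^bsub>U\<^esub> n, \<lambda>\<rho>. n * snd b \<rho>)"

definition zeroB :: "'a monoid \<Rightarrow> 'a \<times> ('a set \<Rightarrow> int)" where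
  "zeroB U = (\<one>\<^bsub>U\<^esub>, \<lambda>_. 0)"

definition transfer :: "'a monoid \<Rightarrow> 'a set \<Rightarrow> ('a set \<Rightarrow> 'a) \<Rightarrow> 'a \<Rightarrow> 'a" where
  "transfer U A r u =
     finprod (subA U A)
       (\<lambda>\<sigma>. r \<sigma> \<otimes>\<^bsub>U\<^esub> u \<otimes>\<^bsub>U\<^esub> inv\<^bsub>U\<^esub> (r (\<sigma> <#>\<^bsub>U\<^esub> (A #>\<^bsub>U\<^esub> u))))
       (carrier (U Mod A))"

end

theory Submission
  imports Defs "HOL-Library.Poly_Mapping" "Jordan_Normal_Form.Determinant"
begin

locale LB =
  fixes U :: "'a monoid" (structure) and A :: "'a set" and r :: "'a set \<Rightarrow> 'a"
  assumes grp: "group U" and fin: "finite (carrier U)" and nrm: "A \<lhd> U"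
    and Acomm: "\<forall>x\<in>A. \<forall>y\<in>A. x \<otimes> y = y \<otimes> x" and der: "derived U (carrier U) \<subseteq> A"
    and rmem: "\<forall>\<sigma>\<in>carrier (U Mod A). r \<sigma> \<in> \<sigma>" and r1: "r A = \<one>"

sublocale LB \<subseteq> normal A U by (rule nrm)

context LB begin

abbreviation "GG \<equiv> U Mod A"

lemma A_sub: "A \<subseteq> carrier U" using subset .

lemma carrier_GG: "\<sigma> \<in> carrier GG \<longleftrightarrow> (\<exists>x\<in>carrier U. \<sigma> = A #> x)"
  by (auto simp: FactGroup_def RCOSETS_def)

lemma coset_in: "x \<in> carrier U \<Longrightarrow> A #> x \<in> carrier GG"
  using carrier_GG by auto

lemma coset_eq: "x \<in> carrier U \<Longrightarrow> y \<in> carrier U \<Longrightarrow> (A #> x = A #> y) \<longleftrightarrow> x \<otimes> inv y \<in> A"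
proof
  assume x: "x \<in> carrier U" and y: "y \<in> carrier U" and e: "A #> x = A #> y"
  have "x \<in> A #> y" using e rcos_self[OF x subgroup_axioms] by simp
  thus "x \<otimes> inv y \<in> A" using rcos_module_imp[OF is_group y] by simp
next
  assume x: "x \<in> carrier U" and y: "y \<in> carrier U" and e: "x \<otimes> inv y \<in> A"
  have "x \<in> A #> y" using rcos_module_rev[OF is_group y x e] .
  thus "A #> x = A #> y" using repr_independence[OF _ y subgroup_axioms] by simp
qed

lemma r_in: "\<sigma> \<in> carrier GG \<Longrightarrow> r \<sigma> \<in> carrier U"
  using rmem carrier_GG by (metis elemrcos_carrier is_group)

lemma r_coset: "\<sigma> \<in> carrier GG \<Longrightarrow> A #> r \<sigma> = \<sigma>"
proof -
  assume s: "\<sigma> \<in> carrier GG"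
  then obtain x where x: "x \<in> carrier U" "\<sigma> = A #> x" using carrier_GG by auto
  have "r \<sigma> \<in> A #> x" using rmem s x by auto
  thus ?thesis using repr_independence[OF _ x(1) subgroup_axioms] x by simp
qed

lemma GG_mult: "x \<in> carrier U \<Longrightarrow> y \<in> carrier U \<Longrightarrow> (A #> x) \<otimes>\<^bsub>GG\<^esub> (A #> y) = A #> (x \<otimes> y)"
  by (simp add: rcos_sum)

lemma GG_inv: "x \<in> carrier U \<Longrightarrow> inv\<^bsub>GG\<^esub> (A #> x) = A #> inv x"
  by (simp add: inv_FactGroup coset_in rcos_inv)

lemma GG_one: "\<one>\<^bsub>GG\<^esub> = A" by simp

lemma GG_group: "group GG" using factorgroup_is_group .

lemma GG_comm: "comm_group GG"
proof (rule group.group_comm_groupI[OF GG_group])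
  fix s t assume s: "s \<in> carrier GG" and t: "t \<in> carrier GG"
  obtain x where x: "x \<in> carrier U" "s = A #> x" using s carrier_GG by auto
  obtain y where y: "y \<in> carrier U" "t = A #> y" using t carrier_GG by auto
  have "x \<otimes> y \<otimes> inv x \<otimes> inv y \<in> derived U (carrier U)"
    using x y unfolding derived_def by (intro generate.incl) blast
  hence "x \<otimes> y \<otimes> inv x \<otimes> inv y \<in> A" using der by auto
  hence "(x \<otimes> y) \<otimes> inv (y \<otimes> x) \<in> A" using x y by (simp add: inv_mult_group m_assoc)
  hence "A #> (x \<otimes> y) = A #> (y \<otimes> x)" using coset_eq x y by simp
  thus "s \<otimes>\<^bsub>GG\<^esub> t = t \<otimes>\<^bsub>GG\<^esub> s" using x y GG_mult by simp
qed

lemma conj_A: "x \<in> carrier U \<Longrightarrow> a \<in> A \<Longrightarrow> x \<otimes> a \<otimes> inv x \<in> A"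
  using inv_op_closed2 by simp

lemma cocycle_A: "\<sigma> \<in> carrier GG \<Longrightarrow> \<tau> \<in> carrier GG \<Longrightarrow> cocycle U A r \<sigma> \<tau> \<in> A"
proof -
  assume s: "\<sigma> \<in> carrier GG" and t: "\<tau> \<in> carrier GG"
  have st: "\<sigma> <#> \<tau> \<in> carrier GG" using monoid.m_closed[OF group.is_monoid[OF GG_group] s t] by simp
  have e: "\<sigma> <#> \<tau> = A #> (r \<sigma> \<otimes> r \<tau>)"
    using GG_mult[OF r_in[OF s] r_in[OF t]] r_coset[OF s] r_coset[OF t] by simp
  have "A #> (r \<sigma> \<otimes> r \<tau>) = A #> r (\<sigma> <#> \<tau>)" using r_coset[OF st] e by simp
  thus ?thesis unfolding cocycle_def using coset_eq r_in[OF s] r_in[OF t] r_in[OF st] by simp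
qed

lemma subA_comm: "comm_group (subA U A)"
  using subgroup_imp_group[OF subgroup_axioms] Acomm
  by (intro group.group_comm_groupI) auto

end

declare mult_FactGroup [simp del]

lemma (in comm_group) finprod_pow_sum:
  assumes "a \<in> carrier G" "finite S"
  shows "finprod G (\<lambda>i. a [^] (k i :: int)) S = a [^] (\<Sum>i\<in>S. k i)"
  using assms(2) by (induct S rule: finite_induct) (simp_all add: assms(1) Pi_def int_pow_mult)

lemma (in comm_group) finprod_int_pow:
  assumes "f \<in> S \<rightarrow> carrier G" "finite S"
  shows "(finprod G f S) [^] (k::int) = finprod G (\<lambda>i. f i [^] k) S"
  using assms(2,1) by (induct S rule: finite_induct) (simp_all add: Pi_def int_pow_distrib)

lemma (in comm_group) finprod_swap:
  assumes "finite S" "finite T" "\<And>i j. i \<in> S \<Longrightarrow> j \<in> T \<Longrightarrow> f i j \<in> carrier G"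
  shows "finprod G (\<lambda>i. finprod G (\<lambda>j. f i j) T) S = finprod G (\<lambda>j. finprod G (\<lambda>i. f i j) S) T"
  using assms(1,3)
proof (induct S rule: finite_induct)
  case empty thus ?case by (simp add: finprod_one_eqI)
next
  case (insert x F)
  have "finprod G (\<lambda>i. finprod G (f i) T) (insert x F) = finprod G (f x) T \<otimes> finprod G (\<lambda>i. finprod G (f i) T) F"
    using insert by (intro finprod_insert) (auto simp: Pi_def)
  also have "\<dots> = finprod G (f x) T \<otimes> finprod G (\<lambda>j. finprod G (\<lambda>i. f i j) F) T"
    using insert by simp
  also have "\<dots> = finprod G (\<lambda>j. f x j \<otimes> finprod G (\<lambda>i. f i j) F) T"
    using insert by (intro finprod_multf[symmetric]) (auto simp: Pi_def)
  also have "\<dots> = finprod G (\<lambda>j. finprod G (\<lambda>i. f i j) (insert x F)) T"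
    using insert by (intro finprod_cong) (auto simp: Pi_def)
  finally show ?case .
qed

lemma (in comm_monoid) finprod_single:
  assumes "finite S" "x \<in> S" "f x \<in> carrier G" "\<And>y. y \<in> S \<Longrightarrow> y \<noteq> x \<Longrightarrow> f y = \<one>"
  shows "finprod G f S = f x"
proof -
  have fc: "f y \<in> carrier G" if "y \<in> S" for y using assms that by (cases "y = x") auto
  have "finprod G f S = finprod G (\<lambda>j. if x = j then f j else \<one>) S"
    apply (rule finprod_cong) using assms fc by (auto simp: simp_implies_def Pi_def)
  also have "\<dots> = f x" apply (rule finprod_singleton) using assms fc by auto
  finally show ?thesis .
qed

lemma finprod_hom:
  assumes G: "comm_group G" and H: "comm_group H" and h: "h \<in> hom G H"
    and f: "f \<in> S \<rightarrow> carrier G" and S: "finite S"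
  shows "h (finprod G f S) = finprod H (\<lambda>i. h (f i)) S"
  using S f
proof (induct S rule: finite_induct)
  case empty
  interpret G: comm_group G by (rule G)
  interpret H: comm_group H by (rule H)
  interpret hh: group_hom G H h by (simp add: group_hom_def group_hom_axioms_def h G.is_group H.is_group)
  show ?case by simp
next
  case (insert x F)
  interpret G: comm_group G by (rule G)
  interpret H: comm_group H by (rule H)
  have hc: "\<And>y. y \<in> carrier G \<Longrightarrow> h y \<in> carrier H" using h by (auto simp: hom_def)
  have "h (finprod G f (insert x F)) = h (f x \<otimes>\<^bsub>G\<^esub> finprod G f F)" using insert by simp
  also have "\<dots> = h (f x) \<otimes>\<^bsub>H\<^esub> h (finprod G f F)" using insert h by (simp add: hom_mult)
  also have "\<dots> = finprod H (\<lambda>i. h (f i)) (insert x F)" using insert hc by (simp add: Pi_def)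
  finally show ?case .
qed

sublocale LB \<subseteq> SA: comm_group "subA U A"
  rewrites "carrier (subA U A) = A" and "monoid.mult (subA U A) = monoid.mult U" and "one (subA U A) = one U"
  by (simp_all add: subA_comm)

sublocale LB \<subseteq> Q: comm_group "U Mod A"
  by (rule GG_comm)

context LB begin

lemma GG_l_one [simp]: "a \<in> carrier GG \<Longrightarrow> A \<otimes>\<^bsub>GG\<^esub> a = a" using Q.l_one by simp
lemma GG_r_one [simp]: "a \<in> carrier GG \<Longrightarrow> a \<otimes>\<^bsub>GG\<^esub> A = a" using Q.r_one by simp
lemma GG_A [simp]: "A \<in> carrier GG" using Q.one_closed by simp

lemma bij_cmult: "c \<in> carrier GG \<Longrightarrow> bij_betw (\<lambda>\<rho>. c \<otimes>\<^bsub>GG\<^esub> \<rho>) (carrier GG) (carrier GG)"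
  by (rule bij_betw_byWitness[where f'="\<lambda>\<rho>. inv\<^bsub>GG\<^esub> c \<otimes>\<^bsub>GG\<^esub> \<rho>"])
     (auto simp: Q.m_assoc[symmetric])

lemma aug_iff: "x \<in> augmentation_ideal U A \<longleftrightarrow> (\<forall>\<sigma>. \<sigma> \<notin> carrier GG \<longrightarrow> x \<sigma> = 0) \<and> (\<Sum>\<sigma>\<in>carrier GG. x \<sigma>) = 0"
  by (simp add: augmentation_ideal_def)

lemma modB_iff: "b \<in> modB U A \<longleftrightarrow> fst b \<in> A \<and> snd b \<in> augmentation_ideal U A"
  by (cases b) (simp add: modB_def)

lemma pow_A: "a \<in> A \<Longrightarrow> a [^] (k::int) \<in> A"
  by (rule subgroup_int_pow_closed[OF subgroup_axioms])

definition Bgrp :: "('a \<times> ('a set \<Rightarrow> int)) monoid" where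
  "Bgrp = \<lparr>carrier = modB U A, monoid.mult = (\<lambda>b c. (fst b \<otimes> fst c, \<lambda>\<rho>. snd b \<rho> + snd c \<rho>)), one = (\<one>, \<lambda>_. 0)\<rparr>"

lemma Bgrp_carrier [simp]: "carrier Bgrp = modB U A" by (simp add: Bgrp_def)

lemma Bgrp_simps: "carrier Bgrp = modB U A" "b \<otimes>\<^bsub>Bgrp\<^esub> c = (fst b \<otimes> fst c, \<lambda>\<rho>. snd b \<rho> + snd c \<rho>)"
  "\<one>\<^bsub>Bgrp\<^esub> = (\<one>, \<lambda>_. 0)"
  by (simp_all add: Bgrp_def)

lemma Bgrp_comm: "comm_group Bgrp"
proof (rule comm_groupI)
  fix x y assume x: "x \<in> carrier Bgrp" and y: "y \<in> carrier Bgrp"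
  thus "x \<otimes>\<^bsub>Bgrp\<^esub> y \<in> carrier Bgrp"
    by (auto simp: Bgrp_simps modB_iff aug_iff sum.distrib)
  show "x \<otimes>\<^bsub>Bgrp\<^esub> y = y \<otimes>\<^bsub>Bgrp\<^esub> x" using x y by (auto simp: Bgrp_simps modB_iff SA.m_comm)
next
  show "\<one>\<^bsub>Bgrp\<^esub> \<in> carrier Bgrp" by (simp add: Bgrp_simps modB_iff aug_iff)
next
  fix x y z assume "x \<in> carrier Bgrp" "y \<in> carrier Bgrp" "z \<in> carrier Bgrp"
  thus "x \<otimes>\<^bsub>Bgrp\<^esub> y \<otimes>\<^bsub>Bgrp\<^esub> z = x \<otimes>\<^bsub>Bgrp\<^esub> (y \<otimes>\<^bsub>Bgrp\<^esub> z)"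
    by (auto simp: Bgrp_simps modB_iff SA.m_assoc add.assoc)
next
  fix x assume "x \<in> carrier Bgrp"
  thus "\<one>\<^bsub>Bgrp\<^esub> \<otimes>\<^bsub>Bgrp\<^esub> x = x" by (auto simp: Bgrp_simps modB_iff)
next
  fix x assume x: "x \<in> carrier Bgrp"
  show "\<exists>y\<in>carrier Bgrp. y \<otimes>\<^bsub>Bgrp\<^esub> x = \<one>\<^bsub>Bgrp\<^esub>"
  proof (intro bexI)
    show "(inv (fst x), \<lambda>\<rho>. - snd x \<rho>) \<otimes>\<^bsub>Bgrp\<^esub> x = \<one>\<^bsub>Bgrp\<^esub>"
      using x A_sub by (auto simp: Bgrp_simps modB_iff)
    show "(inv (fst x), \<lambda>\<rho>. - snd x \<rho>) \<in> carrier Bgrp"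
      using x by (auto simp: Bgrp_simps modB_iff aug_iff sum_negf m_inv_closed)
  qed
qed

end

sublocale LB \<subseteq> BB: comm_group "Bgrp"
  by (rule Bgrp_comm)


context LB begin

abbreviation act where "act \<sigma> b \<equiv> actB U A r \<sigma> b"
abbreviation cc where "cc \<sigma> \<tau> \<equiv> cocycle U A r \<sigma> \<tau>"
definition cj where "cj x a = x \<otimes> a \<otimes> inv x"

lemma cc_def': "cc \<sigma> \<tau> = r \<sigma> \<otimes> r \<tau> \<otimes> inv (r (\<sigma> \<otimes>\<^bsub>GG\<^esub> \<tau>))"
  by (simp add: cocycle_def mult_FactGroup)

lemma actB_fst: "fst (act \<sigma> b) = cj (r \<sigma>) (fst b) \<otimes> finprod (subA U A) (\<lambda>\<tau>. cc \<sigma> \<tau> [^] snd b \<tau>) (carrier GG)"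
  by (simp add: actB_def cj_def)

lemma actB_snd: "snd (act \<sigma> b) = (\<lambda>\<rho>. if \<rho> \<in> carrier GG then snd b (inv\<^bsub>GG\<^esub> \<sigma> \<otimes>\<^bsub>GG\<^esub> \<rho>) else 0)"
  by (simp add: actB_def)

lemma cc_A: "\<sigma> \<in> carrier GG \<Longrightarrow> \<tau> \<in> carrier GG \<Longrightarrow> cc \<sigma> \<tau> \<in> A"
  by (rule cocycle_A)

lemma cc_pow_A: "\<sigma> \<in> carrier GG \<Longrightarrow> \<tau> \<in> carrier GG \<Longrightarrow> cc \<sigma> \<tau> [^] (k::int) \<in> A"
  by (rule pow_A[OF cc_A])

lemma cj_A: "x \<in> carrier U \<Longrightarrow> a \<in> A \<Longrightarrow> cj x a \<in> A"
  unfolding cj_def by (rule conj_A)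

lemma cj_hom_U: "x \<in> carrier U \<Longrightarrow> cj x \<in> hom U U"
  unfolding cj_def hom_def by (auto simp: m_assoc inv_closed) (simp add: m_assoc[symmetric])

lemma cj_mult: "x \<in> carrier U \<Longrightarrow> a \<in> carrier U \<Longrightarrow> b \<in> carrier U \<Longrightarrow> cj x (a \<otimes> b) = cj x a \<otimes> cj x b"
  using cj_hom_U by (simp add: hom_mult)

lemma cj_pow: "x \<in> carrier U \<Longrightarrow> a \<in> carrier U \<Longrightarrow> cj x (a [^] (k::int)) = cj x a [^] k"
  using hom_int_pow[OF cj_hom_U _ is_group is_group] by simp

lemma GG_inv_one [simp]: "inv\<^bsub>GG\<^esub> A = A" using Q.inv_one by simp

lemma cj_hom_A: "x \<in> carrier U \<Longrightarrow> cj x \<in> hom (subA U A) (subA U A)"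
  using cj_A cj_mult A_sub unfolding hom_def by (auto simp: Pi_def subsetD)

lemma cj_finprod: "x \<in> carrier U \<Longrightarrow> f \<in> S \<rightarrow> A \<Longrightarrow> finite S \<Longrightarrow>
   cj x (finprod (subA U A) f S) = finprod (subA U A) (\<lambda>i. cj x (f i)) S"
  using finprod_hom[OF subA_comm subA_comm cj_hom_A] by simp

lemma powA_mult: "a \<in> A \<Longrightarrow> a [^] (i + j :: int) = a [^] i \<otimes> a [^] j"
  using A_sub by (simp add: int_pow_mult subsetD)

lemma powA_distrib: "a \<in> A \<Longrightarrow> b \<in> A \<Longrightarrow> (a \<otimes> b) [^] (i :: int) = a [^] i \<otimes> b [^] i"
  using A_sub Acomm by (intro int_pow_mult_distrib) (auto simp: subsetD)

lemma finprod_pow_sumA: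
  assumes "a \<in> A" "finite S"
  shows "finprod (subA U A) (\<lambda>i. a [^] (k i :: int)) S = a [^] (\<Sum>i\<in>S. k i)"
  using assms(2) by (induct S rule: finite_induct) (simp_all add: assms(1) Pi_def pow_A powA_mult)

lemma finprod_distribA:
  assumes "f \<in> S \<rightarrow> A" "g \<in> S \<rightarrow> A"
  shows "finprod (subA U A) (\<lambda>i. f i \<otimes> g i) S = finprod (subA U A) f S \<otimes> finprod (subA U A) g S"
  using SA.finprod_multf assms by simp

lemma sum_shift: "c \<in> carrier GG \<Longrightarrow> (\<Sum>\<rho>\<in>carrier GG. f (c \<otimes>\<^bsub>GG\<^esub> \<rho>)) = (\<Sum>\<rho>\<in>carrier GG. f \<rho>)"
  using sum.reindex_bij_betw[OF bij_cmult] by blast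

lemma finprod_shift: "c \<in> carrier GG \<Longrightarrow> f \<in> carrier GG \<rightarrow> A \<Longrightarrow>
   finprod (subA U A) (\<lambda>\<rho>. f (c \<otimes>\<^bsub>GG\<^esub> \<rho>)) (carrier GG) = finprod (subA U A) f (carrier GG)"
proof -
  assume c: "c \<in> carrier GG" and f: "f \<in> carrier GG \<rightarrow> A"
  have im: "(\<lambda>\<rho>. c \<otimes>\<^bsub>GG\<^esub> \<rho>) ` carrier GG = carrier GG" using bij_cmult[OF c] by (simp add: bij_betw_def)
  have inj: "inj_on (\<lambda>\<rho>. c \<otimes>\<^bsub>GG\<^esub> \<rho>) (carrier GG)" using bij_cmult[OF c] by (simp add: bij_betw_def)
  show ?thesis using SA.finprod_reindex[of f "\<lambda>\<rho>. c \<otimes>\<^bsub>GG\<^esub> \<rho>" "carrier GG"] im inj f by simp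
qed

lemma finite_GG: "finite (carrier GG)"
proof -
  have "carrier GG = (\<lambda>x. A #> x) ` carrier U" by (auto simp: carrier_GG)
  thus ?thesis using fin by simp
qed

lemma act_closed: "\<sigma> \<in> carrier GG \<Longrightarrow> b \<in> modB U A \<Longrightarrow> act \<sigma> b \<in> modB U A"
proof -
  assume s: "\<sigma> \<in> carrier GG" and b: "b \<in> modB U A"
  have "fst (act \<sigma> b) \<in> A" unfolding actB_fst
    using b s r_in by (intro SA.m_closed cj_A SA.finprod_closed) (auto simp: modB_iff cc_pow_A)
  moreover have "snd (act \<sigma> b) \<in> augmentation_ideal U A"
  proof -
    have "(\<Sum>\<rho>\<in>carrier GG. snd (act \<sigma> b) \<rho>) = (\<Sum>\<rho>\<in>carrier GG. snd b (inv\<^bsub>GG\<^esub> \<sigma> \<otimes>\<^bsub>GG\<^esub> \<rho>))"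
      by (simp add: actB_snd)
    also have "\<dots> = (\<Sum>\<rho>\<in>carrier GG. snd b \<rho>)" using s by (intro sum_shift) simp
    also have "\<dots> = 0" using b by (simp add: modB_iff aug_iff)
    finally show ?thesis by (simp add: aug_iff actB_snd)
  qed
  ultimately show ?thesis by (simp add: modB_iff)
qed

lemma act_mult: "\<sigma> \<in> carrier GG \<Longrightarrow> b \<in> modB U A \<Longrightarrow> c \<in> modB U A \<Longrightarrow>
   act \<sigma> (b \<otimes>\<^bsub>Bgrp\<^esub> c) = act \<sigma> b \<otimes>\<^bsub>Bgrp\<^esub> act \<sigma> c"
proof -
  assume s: "\<sigma> \<in> carrier GG" and b: "b \<in> modB U A" and c: "c \<in> modB U A"
  have ba: "fst b \<in> A" and ca: "fst c \<in> A" using b c by (auto simp: modB_iff)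
  have cjb: "cj (r \<sigma>) (fst b) \<in> A" and cjc: "cj (r \<sigma>) (fst c) \<in> A" using ba ca r_in[OF s] cj_A by auto
  have "finprod (subA U A) (\<lambda>\<tau>. cc \<sigma> \<tau> [^] (snd b \<tau> + snd c \<tau>)) (carrier GG)
     = finprod (subA U A) (\<lambda>\<tau>. cc \<sigma> \<tau> [^] snd b \<tau> \<otimes> cc \<sigma> \<tau> [^] snd c \<tau>) (carrier GG)"
    using s by (intro SA.finprod_cong') (auto simp: powA_mult cc_A cc_pow_A Pi_def)
  also have "\<dots> = finprod (subA U A) (\<lambda>\<tau>. cc \<sigma> \<tau> [^] snd b \<tau>) (carrier GG) \<otimes>
                  finprod (subA U A) (\<lambda>\<tau>. cc \<sigma> \<tau> [^] snd c \<tau>) (carrier GG)"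
    using s by (intro finprod_distribA) (auto simp: cc_pow_A)
  finally have F: "finprod (subA U A) (\<lambda>\<tau>. cc \<sigma> \<tau> [^] (snd b \<tau> + snd c \<tau>)) (carrier GG)
     = finprod (subA U A) (\<lambda>\<tau>. cc \<sigma> \<tau> [^] snd b \<tau>) (carrier GG) \<otimes>
                  finprod (subA U A) (\<lambda>\<tau>. cc \<sigma> \<tau> [^] snd c \<tau>) (carrier GG)" .
  have P1: "finprod (subA U A) (\<lambda>\<tau>. cc \<sigma> \<tau> [^] snd b \<tau>) (carrier GG) \<in> A"
   and P2: "finprod (subA U A) (\<lambda>\<tau>. cc \<sigma> \<tau> [^] snd c \<tau>) (carrier GG) \<in> A"
    using s by (auto intro!: SA.finprod_closed simp: cc_pow_A)
  have "fst (act \<sigma> (b \<otimes>\<^bsub>Bgrp\<^esub> c)) = fst (act \<sigma> b \<otimes>\<^bsub>Bgrp\<^esub> act \<sigma> c)"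
    unfolding actB_fst Bgrp_simps fst_conv snd_conv F
    using ba ca A_sub r_in[OF s] cjb cjc P1 P2
    by (simp add: cj_mult subsetD SA.m_assoc SA.m_comm SA.m_lcomm)
  moreover have "snd (act \<sigma> (b \<otimes>\<^bsub>Bgrp\<^esub> c)) = snd (act \<sigma> b \<otimes>\<^bsub>Bgrp\<^esub> act \<sigma> c)"
    by (auto simp: actB_snd Bgrp_simps)
  ultimately show ?thesis by (simp add: prod_eq_iff)
qed

lemma act_one: "b \<in> modB U A \<Longrightarrow> act A b = b"
proof -
  assume b: "b \<in> modB U A"
  have c1: "\<tau> \<in> carrier GG \<Longrightarrow> cc A \<tau> = \<one>" for \<tau>
    using r_in by (simp add: cc_def' r1)
  have "finprod (subA U A) (\<lambda>\<tau>. cc A \<tau> [^] snd b \<tau>) (carrier GG) = \<one>"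
    by (rule SA.finprod_one_eqI) (simp add: c1)
  hence "fst (act A b) = fst b" using b A_sub by (auto simp: actB_fst cj_def r1 modB_iff subsetD)
  moreover have "snd (act A b) = snd b" using b
    by (auto simp: actB_snd modB_iff aug_iff)
  ultimately show ?thesis by (simp add: prod_eq_iff)
qed

end

context LB begin

lemma cancel1: "x \<in> carrier U \<Longrightarrow> y \<in> carrier U \<Longrightarrow> inv x \<otimes> (x \<otimes> y) = y"
  by (simp add: m_assoc[symmetric])
lemma cancel2: "x \<in> carrier U \<Longrightarrow> y \<in> carrier U \<Longrightarrow> x \<otimes> (inv x \<otimes> y) = y"
  by (simp add: m_assoc[symmetric])

lemma rr: "\<sigma> \<in> carrier GG \<Longrightarrow> \<tau> \<in> carrier GG \<Longrightarrow> r \<sigma> \<otimes> r \<tau> = cc \<sigma> \<tau> \<otimes> r (\<sigma> \<otimes>\<^bsub>GG\<^esub> \<tau>)"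
  by (simp add: cc_def' m_assoc r_in)

lemma cj_comp: "x \<in> carrier U \<Longrightarrow> y \<in> carrier U \<Longrightarrow> a \<in> carrier U \<Longrightarrow> cj (x \<otimes> y) a = cj x (cj y a)"
  by (simp add: cj_def m_assoc inv_mult_group)

lemma cj_A_triv: "c \<in> A \<Longrightarrow> y \<in> A \<Longrightarrow> cj c y = y"
proof -
  assume c: "c \<in> A" and y: "y \<in> A"
  have cy: "c \<otimes> y = y \<otimes> c" using Acomm c y by auto
  show ?thesis using c y A_sub unfolding cj_def cy by (simp add: subsetD m_assoc)
qed

lemma cj_cj: "\<sigma> \<in> carrier GG \<Longrightarrow> \<tau> \<in> carrier GG \<Longrightarrow> a \<in> A \<Longrightarrow>
    cj (r \<sigma>) (cj (r \<tau>) a) = cj (r (\<sigma> \<otimes>\<^bsub>GG\<^esub> \<tau>)) a"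
proof -
  assume s: "\<sigma> \<in> carrier GG" and t: "\<tau> \<in> carrier GG" and a: "a \<in> A"
  have st: "\<sigma> \<otimes>\<^bsub>GG\<^esub> \<tau> \<in> carrier GG" using s t by simp
  have aU: "a \<in> carrier U" using a A_sub by auto
  have "cj (r \<sigma>) (cj (r \<tau>) a) = cj (r \<sigma> \<otimes> r \<tau>) a" using s t aU r_in by (simp add: cj_comp)
  also have "\<dots> = cj (cc \<sigma> \<tau> \<otimes> r (\<sigma> \<otimes>\<^bsub>GG\<^esub> \<tau>)) a" using rr s t by simp
  also have "\<dots> = cj (cc \<sigma> \<tau>) (cj (r (\<sigma> \<otimes>\<^bsub>GG\<^esub> \<tau>)) a)"
    using cc_A[OF s t] A_sub r_in[OF st] aU by (intro cj_comp) auto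
  also have "\<dots> = cj (r (\<sigma> \<otimes>\<^bsub>GG\<^esub> \<tau>)) a"
    using cc_A[OF s t] cj_A[OF r_in[OF st] a] by (rule cj_A_triv)
  finally show ?thesis .
qed

lemma cc_cocycle: "\<sigma> \<in> carrier GG \<Longrightarrow> \<tau> \<in> carrier GG \<Longrightarrow> \<rho> \<in> carrier GG \<Longrightarrow>
   cj (r \<sigma>) (cc \<tau> \<rho>) \<otimes> cc \<sigma> (\<tau> \<otimes>\<^bsub>GG\<^esub> \<rho>) = cc \<sigma> \<tau> \<otimes> cc (\<sigma> \<otimes>\<^bsub>GG\<^esub> \<tau>) \<rho>"
proof -
  assume s: "\<sigma> \<in> carrier GG" and t: "\<tau> \<in> carrier GG" and p: "\<rho> \<in> carrier GG"
  have e: "\<sigma> \<otimes>\<^bsub>GG\<^esub> (\<tau> \<otimes>\<^bsub>GG\<^esub> \<rho>) = \<sigma> \<otimes>\<^bsub>GG\<^esub> \<tau> \<otimes>\<^bsub>GG\<^esub> \<rho>" using s t p by (simp add: Q.m_assoc)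
  have tp: "\<tau> \<otimes>\<^bsub>GG\<^esub> \<rho> \<in> carrier GG" and st: "\<sigma> \<otimes>\<^bsub>GG\<^esub> \<tau> \<in> carrier GG"
   and stp: "\<sigma> \<otimes>\<^bsub>GG\<^esub> \<tau> \<otimes>\<^bsub>GG\<^esub> \<rho> \<in> carrier GG" using s t p by auto
  note rs = r_in[OF s] r_in[OF t] r_in[OF p] r_in[OF tp] r_in[OF st] r_in[OF stp]
  show ?thesis unfolding cc_def' cj_def e using rs
    by (simp add: m_assoc cancel1 cancel2)
qed

lemma act_comp: "\<sigma> \<in> carrier GG \<Longrightarrow> \<tau> \<in> carrier GG \<Longrightarrow> b \<in> modB U A \<Longrightarrow>
   act \<sigma> (act \<tau> b) = act (\<sigma> \<otimes>\<^bsub>GG\<^esub> \<tau>) b"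
proof -
  assume s: "\<sigma> \<in> carrier GG" and t: "\<tau> \<in> carrier GG" and b: "b \<in> modB U A"
  have st: "\<sigma> \<otimes>\<^bsub>GG\<^esub> \<tau> \<in> carrier GG" using s t by simp
  define a where "a = fst b"
  define x where "x = snd b"
  have a: "a \<in> A" using b by (simp add: modB_iff a_def)
  have x0: "\<And>\<rho>. \<rho> \<notin> carrier GG \<Longrightarrow> x \<rho> = 0" and xs: "(\<Sum>\<rho>\<in>carrier GG. x \<rho>) = 0"
    using b by (auto simp: modB_iff aug_iff x_def)
  define P where "P = finprod (subA U A) (\<lambda>\<rho>. cc \<tau> \<rho> [^] x \<rho>) (carrier GG)"
  have PA: "P \<in> A" unfolding P_def using t by (auto intro!: SA.finprod_closed simp: cc_pow_A)
  have f1: "fst (act \<tau> b) = cj (r \<tau>) a \<otimes> P" by (simp add: actB_fst a_def x_def P_def)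
  have s1: "\<And>\<rho>. \<rho> \<in> carrier GG \<Longrightarrow> snd (act \<tau> b) \<rho> = x (inv\<^bsub>GG\<^esub> \<tau> \<otimes>\<^bsub>GG\<^esub> \<rho>)"
    by (simp add: actB_snd x_def)
  have cjP: "cj (r \<sigma>) P = finprod (subA U A) (\<lambda>\<rho>. cj (r \<sigma>) (cc \<tau> \<rho>) [^] x \<rho>) (carrier GG)"
  proof -
    have "cj (r \<sigma>) P = finprod (subA U A) (\<lambda>\<rho>. cj (r \<sigma>) (cc \<tau> \<rho> [^] x \<rho>)) (carrier GG)"
      unfolding P_def using r_in[OF s] t finite_GG by (intro cj_finprod) (auto simp: cc_pow_A)
    also have "\<dots> = finprod (subA U A) (\<lambda>\<rho>. cj (r \<sigma>) (cc \<tau> \<rho>) [^] x \<rho>) (carrier GG)"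
      using r_in[OF s] t cc_A A_sub by (intro SA.finprod_cong') (auto simp: cj_pow subsetD cj_A pow_A)
    finally show ?thesis .
  qed
  have sh: "finprod (subA U A) (\<lambda>\<rho>. cc \<sigma> \<rho> [^] snd (act \<tau> b) \<rho>) (carrier GG)
          = finprod (subA U A) (\<lambda>\<rho>. cc \<sigma> (\<tau> \<otimes>\<^bsub>GG\<^esub> \<rho>) [^] x \<rho>) (carrier GG)"
  proof -
    have "finprod (subA U A) (\<lambda>\<rho>. cc \<sigma> \<rho> [^] snd (act \<tau> b) \<rho>) (carrier GG)
        = finprod (subA U A) (\<lambda>\<rho>. cc \<sigma> \<rho> [^] x (inv\<^bsub>GG\<^esub> \<tau> \<otimes>\<^bsub>GG\<^esub> \<rho>)) (carrier GG)"
      using s by (intro SA.finprod_cong') (auto simp: s1 cc_pow_A)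
    also have "\<dots> = finprod (subA U A) (\<lambda>\<rho>. cc \<sigma> (\<tau> \<otimes>\<^bsub>GG\<^esub> \<rho>) [^] x (inv\<^bsub>GG\<^esub> \<tau> \<otimes>\<^bsub>GG\<^esub> (\<tau> \<otimes>\<^bsub>GG\<^esub> \<rho>))) (carrier GG)"
      using s t by (intro finprod_shift[symmetric]) (auto simp: cc_pow_A)
    also have "\<dots> = finprod (subA U A) (\<lambda>\<rho>. cc \<sigma> (\<tau> \<otimes>\<^bsub>GG\<^esub> \<rho>) [^] x \<rho>) (carrier GG)"
      using s t by (intro SA.finprod_cong') (auto simp: cc_pow_A Q.m_assoc[symmetric])
    finally show ?thesis .
  qed
  have comb: "finprod (subA U A) (\<lambda>\<rho>. cj (r \<sigma>) (cc \<tau> \<rho>) [^] x \<rho>) (carrier GG) \<otimes>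
              finprod (subA U A) (\<lambda>\<rho>. cc \<sigma> (\<tau> \<otimes>\<^bsub>GG\<^esub> \<rho>) [^] x \<rho>) (carrier GG)
            = finprod (subA U A) (\<lambda>\<rho>. cc (\<sigma> \<otimes>\<^bsub>GG\<^esub> \<tau>) \<rho> [^] x \<rho>) (carrier GG)"
  proof -
    have cjA: "\<And>\<rho>. \<rho> \<in> carrier GG \<Longrightarrow> cj (r \<sigma>) (cc \<tau> \<rho>) \<in> A" using r_in[OF s] t cc_A cj_A by auto
    have "finprod (subA U A) (\<lambda>\<rho>. cj (r \<sigma>) (cc \<tau> \<rho>) [^] x \<rho>) (carrier GG) \<otimes>
              finprod (subA U A) (\<lambda>\<rho>. cc \<sigma> (\<tau> \<otimes>\<^bsub>GG\<^esub> \<rho>) [^] x \<rho>) (carrier GG)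
        = finprod (subA U A) (\<lambda>\<rho>. cj (r \<sigma>) (cc \<tau> \<rho>) [^] x \<rho> \<otimes> cc \<sigma> (\<tau> \<otimes>\<^bsub>GG\<^esub> \<rho>) [^] x \<rho>) (carrier GG)"
      using s t cjA by (intro finprod_distribA[symmetric]) (auto simp: pow_A cc_pow_A)
    also have "\<dots> = finprod (subA U A) (\<lambda>\<rho>. (cc \<sigma> \<tau> \<otimes> cc (\<sigma> \<otimes>\<^bsub>GG\<^esub> \<tau>) \<rho>) [^] x \<rho>) (carrier GG)"
      using s t cjA by (intro SA.finprod_cong') (auto simp: powA_distrib[symmetric] cc_A cc_cocycle pow_A)
    also have "\<dots> = finprod (subA U A) (\<lambda>\<rho>. cc \<sigma> \<tau> [^] x \<rho> \<otimes> cc (\<sigma> \<otimes>\<^bsub>GG\<^esub> \<tau>) \<rho> [^] x \<rho>) (carrier GG)"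
      using s t st by (intro SA.finprod_cong') (auto simp: powA_distrib cc_A pow_A)
    also have "\<dots> = finprod (subA U A) (\<lambda>\<rho>. cc \<sigma> \<tau> [^] x \<rho>) (carrier GG) \<otimes>
                    finprod (subA U A) (\<lambda>\<rho>. cc (\<sigma> \<otimes>\<^bsub>GG\<^esub> \<tau>) \<rho> [^] x \<rho>) (carrier GG)"
      using s t st by (intro finprod_distribA) (auto simp: cc_pow_A)
    also have "finprod (subA U A) (\<lambda>\<rho>. cc \<sigma> \<tau> [^] x \<rho>) (carrier GG) = \<one>"
      using finprod_pow_sumA[OF cc_A[OF s t] finite_GG] xs by simp
    finally show ?thesis using st by (auto intro!: SA.finprod_closed simp: cc_pow_A A_sub subsetD)
  qed
  have cjA2: "cj (r \<sigma>) (cj (r \<tau>) a) \<in> A" using cj_A r_in s t a by auto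
  have FA: "finprod (subA U A) (\<lambda>\<rho>. cc \<sigma> (\<tau> \<otimes>\<^bsub>GG\<^esub> \<rho>) [^] x \<rho>) (carrier GG) \<in> A"
    using s t by (auto intro!: SA.finprod_closed simp: cc_pow_A)
  have cjPA: "cj (r \<sigma>) P \<in> A" using cj_A r_in[OF s] PA by auto
  have "fst (act \<sigma> (act \<tau> b)) = cj (r \<sigma>) (cj (r \<tau>) a \<otimes> P) \<otimes>
          finprod (subA U A) (\<lambda>\<rho>. cc \<sigma> \<rho> [^] snd (act \<tau> b) \<rho>) (carrier GG)"
    by (subst actB_fst) (simp only: f1)
  also have "\<dots> = cj (r \<sigma>) (cj (r \<tau>) a) \<otimes> (cj (r \<sigma>) P \<otimes>
          finprod (subA U A) (\<lambda>\<rho>. cc \<sigma> (\<tau> \<otimes>\<^bsub>GG\<^esub> \<rho>) [^] x \<rho>) (carrier GG))"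
    using r_in[OF s] r_in[OF t] a PA A_sub cj_A FA cjPA cjA2
    by (simp add: sh cj_mult subsetD m_assoc)
  also have "\<dots> = cj (r (\<sigma> \<otimes>\<^bsub>GG\<^esub> \<tau>)) a \<otimes> finprod (subA U A) (\<lambda>\<rho>. cc (\<sigma> \<otimes>\<^bsub>GG\<^esub> \<tau>) \<rho> [^] x \<rho>) (carrier GG)"
    using cjP comb cj_cj[OF s t a] by simp
  also have "\<dots> = fst (act (\<sigma> \<otimes>\<^bsub>GG\<^esub> \<tau>) b)" by (simp add: actB_fst a_def x_def)
  finally have F: "fst (act \<sigma> (act \<tau> b)) = fst (act (\<sigma> \<otimes>\<^bsub>GG\<^esub> \<tau>) b)" .
  have S: "snd (act \<sigma> (act \<tau> b)) = snd (act (\<sigma> \<otimes>\<^bsub>GG\<^esub> \<tau>) b)"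
  proof
    fix \<rho> show "snd (act \<sigma> (act \<tau> b)) \<rho> = snd (act (\<sigma> \<otimes>\<^bsub>GG\<^esub> \<tau>) b) \<rho>"
      using s t by (auto simp: actB_snd Q.inv_mult_group Q.m_assoc)
  qed
  show ?thesis using F S by (simp add: prod_eq_iff)
qed

end

type_synonym 'a pr = "('a set \<Rightarrow>\<^sub>0 nat) \<Rightarrow>\<^sub>0 int"

lemma update_eq_add: "a \<notin> Poly_Mapping.keys f \<Longrightarrow> Poly_Mapping.update a b f = f + Poly_Mapping.single a b"
  by (rule poly_mapping_eqI) (auto simp: lookup_update lookup_add lookup_single when_def in_keys_iff)

lemma pm_induct[case_names zero add]:
  assumes "P 0" "\<And>f a b. P f \<Longrightarrow> P (f + Poly_Mapping.single a b)"
  shows "P f"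
  by (induct f rule: update_induct) (auto simp: update_eq_add assms)

context LB begin

definition ev :: "('a set \<Rightarrow>\<^sub>0 nat) \<Rightarrow> 'a set" where
  "ev m = finprod GG (\<lambda>\<xi>. \<xi> [^]\<^bsub>GG\<^esub> (Poly_Mapping.lookup m \<xi>)) (carrier GG)"

definition phi :: "'a pr \<Rightarrow> 'a set \<Rightarrow> int" where
  "phi p \<sigma> = (\<Sum>k\<in>Poly_Mapping.keys p. if ev k = \<sigma> then Poly_Mapping.lookup p k else 0)"

definition eps :: "'a pr \<Rightarrow> int" where
  "eps p = (\<Sum>k\<in>Poly_Mapping.keys p. Poly_Mapping.lookup p k)"

definition pact :: "'a pr \<Rightarrow> 'a \<times> ('a set \<Rightarrow> int) \<Rightarrow> 'a \<times> ('a set \<Rightarrow> int)" where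
  "pact p b = finprod Bgrp (\<lambda>\<sigma>. act \<sigma> b [^]\<^bsub>Bgrp\<^esub> (phi p \<sigma>)) (carrier GG)"

definition tv :: "'a set \<Rightarrow> 'a pr" where
  "tv \<xi> = Poly_Mapping.single (Poly_Mapping.single \<xi> 1) 1"

lemma ev_closed [simp]: "ev m \<in> carrier GG"
  unfolding ev_def by (auto intro: Q.finprod_closed)

lemma ev_add: "ev (m1 + m2) = ev m1 \<otimes>\<^bsub>GG\<^esub> ev m2"
proof -
  have "ev (m1 + m2) = finprod GG (\<lambda>\<xi>. \<xi> [^]\<^bsub>GG\<^esub> (Poly_Mapping.lookup m1 \<xi>) \<otimes>\<^bsub>GG\<^esub> \<xi> [^]\<^bsub>GG\<^esub> (Poly_Mapping.lookup m2 \<xi>)) (carrier GG)"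
    unfolding ev_def by (intro Q.finprod_cong') (auto simp: lookup_add Q.nat_pow_mult)
  also have "\<dots> = ev m1 \<otimes>\<^bsub>GG\<^esub> ev m2" unfolding ev_def by (rule Q.finprod_multf) auto
  finally show ?thesis .
qed

lemma ev_zero [simp]: "ev 0 = A"
  unfolding ev_def by (simp add: Q.finprod_one_eqI)

lemma ev_single: "\<xi> \<in> carrier GG \<Longrightarrow> ev (Poly_Mapping.single \<xi> 1) = \<xi>"
  unfolding ev_def
  by (subst Q.finprod_single[of _ \<xi>]) (auto simp: finite_GG lookup_single when_def)

lemma phi_add: "phi (p + q) \<sigma> = phi p \<sigma> + phi q \<sigma>"
  unfolding phi_def by (rule setsum_keys_plus_distrib) auto

lemma phi_zero [simp]: "phi 0 \<sigma> = 0" by (simp add: phi_def)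

lemma phi_uminus: "phi (- p) \<sigma> = - phi p \<sigma>"
  using phi_add[of p "-p" \<sigma>] by simp

lemma phi_single: "phi (Poly_Mapping.single m c) \<sigma> = (if ev m = \<sigma> then c else 0)"
  by (simp add: phi_def)

lemma eps_add: "eps (p + q) = eps p + eps q"
  unfolding eps_def by (rule setsum_keys_plus_distrib) auto

lemma eps_zero [simp]: "eps 0 = 0" by (simp add: eps_def)

lemma eps_single: "eps (Poly_Mapping.single m c) = c"
  by (simp add: eps_def)

lemma eps_phi: "eps p = (\<Sum>\<sigma>\<in>carrier GG. phi p \<sigma>)"
proof -
  have "(\<Sum>\<sigma>\<in>carrier GG. phi p \<sigma>) = (\<Sum>k\<in>Poly_Mapping.keys p. \<Sum>\<sigma>\<in>carrier GG. if ev k = \<sigma> then Poly_Mapping.lookup p k else 0)"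
    unfolding phi_def by (rule sum.swap)
  also have "\<dots> = (\<Sum>k\<in>Poly_Mapping.keys p. Poly_Mapping.lookup p k)"
    using finite_GG by (intro sum.cong) (auto simp: sum.delta)
  finally show ?thesis by (simp add: eps_def)
qed

lemma act_hom: "\<sigma> \<in> carrier GG \<Longrightarrow> act \<sigma> \<in> hom Bgrp Bgrp"
  unfolding hom_def using act_closed act_mult by auto

lemma act_pow: "\<sigma> \<in> carrier GG \<Longrightarrow> b \<in> modB U A \<Longrightarrow> act \<sigma> (b [^]\<^bsub>Bgrp\<^esub> (k::int)) = act \<sigma> b [^]\<^bsub>Bgrp\<^esub> k"
  using hom_int_pow[OF act_hom _ BB.is_group BB.is_group] by simp

lemma actpow_closed: "\<sigma> \<in> carrier GG \<Longrightarrow> b \<in> modB U A \<Longrightarrow> act \<sigma> b [^]\<^bsub>Bgrp\<^esub> (k::int) \<in> modB U A"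
  using BB.int_pow_closed act_closed by simp

lemma pact_closed: "b \<in> modB U A \<Longrightarrow> pact p b \<in> modB U A"
proof -
  assume b: "b \<in> modB U A"
  have "\<And>\<sigma>. \<sigma> \<in> carrier GG \<Longrightarrow> act \<sigma> b [^]\<^bsub>Bgrp\<^esub> (phi p \<sigma>) \<in> carrier Bgrp"
    using BB.int_pow_closed act_closed b by simp
  thus ?thesis unfolding pact_def using BB.finprod_closed[of "\<lambda>\<sigma>. act \<sigma> b [^]\<^bsub>Bgrp\<^esub> (phi p \<sigma>)" "carrier GG"]
    by (simp add: Pi_def)
qed

lemma pact_add: "b \<in> modB U A \<Longrightarrow> pact (p + q) b = pact p b \<otimes>\<^bsub>Bgrp\<^esub> pact q b"
proof -
  assume b: "b \<in> modB U A"
  have e: "\<And>\<sigma>. \<sigma> \<in> carrier GG \<Longrightarrow> act \<sigma> b [^]\<^bsub>Bgrp\<^esub> (phi p \<sigma> + phi q \<sigma>) = act \<sigma> b [^]\<^bsub>Bgrp\<^esub> (phi p \<sigma>) \<otimes>\<^bsub>Bgrp\<^esub> act \<sigma> b [^]\<^bsub>Bgrp\<^esub> (phi q \<sigma>)"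
    using act_closed b by (simp add: BB.int_pow_mult)
  have c: "\<And>\<sigma>. \<sigma> \<in> carrier GG \<Longrightarrow> act \<sigma> b [^]\<^bsub>Bgrp\<^esub> (phi p \<sigma>) \<otimes>\<^bsub>Bgrp\<^esub> act \<sigma> b [^]\<^bsub>Bgrp\<^esub> (phi q \<sigma>) \<in> modB U A"
    using actpow_closed b BB.m_closed by simp
  have "pact (p + q) b = finprod Bgrp (\<lambda>\<sigma>. act \<sigma> b [^]\<^bsub>Bgrp\<^esub> (phi p \<sigma>) \<otimes>\<^bsub>Bgrp\<^esub> act \<sigma> b [^]\<^bsub>Bgrp\<^esub> (phi q \<sigma>)) (carrier GG)"
    unfolding pact_def phi_add by (rule BB.finprod_cong') (simp_all add: e c Pi_def)
  also have "\<dots> = pact p b \<otimes>\<^bsub>Bgrp\<^esub> pact q b" unfolding pact_def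
    by (rule BB.finprod_multf) (simp_all add: Pi_def actpow_closed b)
  finally show ?thesis .
qed

lemma pact_zero [simp]: "pact 0 b = \<one>\<^bsub>Bgrp\<^esub>"
  unfolding pact_def by (simp add: BB.finprod_one_eqI)

lemma pact_single: "b \<in> modB U A \<Longrightarrow> pact (Poly_Mapping.single m c) b = act (ev m) b [^]\<^bsub>Bgrp\<^esub> c"
proof -
  assume b: "b \<in> modB U A"
  have "pact (Poly_Mapping.single m c) b = (\<lambda>\<sigma>. act \<sigma> b [^]\<^bsub>Bgrp\<^esub> (if ev m = \<sigma> then c else 0)) (ev m)"
    unfolding pact_def phi_single
  proof (rule BB.finprod_single)
    show "finite (carrier GG)" by (rule finite_GG)
    show "ev m \<in> carrier GG" by simp
    show "act (ev m) b [^]\<^bsub>Bgrp\<^esub> (if ev m = ev m then c else 0) \<in> carrier Bgrp"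
      using actpow_closed[OF ev_closed b] by simp
    fix y assume "y \<in> carrier GG" "y \<noteq> ev m"
    thus "act y b [^]\<^bsub>Bgrp\<^esub> (if ev m = y then c else 0) = \<one>\<^bsub>Bgrp\<^esub>" by simp
  qed
  thus ?thesis by simp
qed

lemma pact_uminus: "b \<in> modB U A \<Longrightarrow> pact (- p) b = inv\<^bsub>Bgrp\<^esub> pact p b"
proof -
  assume b: "b \<in> modB U A"
  have "pact p b \<otimes>\<^bsub>Bgrp\<^esub> pact (- p) b = \<one>\<^bsub>Bgrp\<^esub>" using pact_add[OF b, of p "-p"] by simp
  hence "pact (- p) b \<otimes>\<^bsub>Bgrp\<^esub> pact p b = \<one>\<^bsub>Bgrp\<^esub>"
    using b pact_closed BB.m_comm by simp
  hence "inv\<^bsub>Bgrp\<^esub> pact p b = pact (- p) b" using b pact_closed by (intro BB.inv_equality) auto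
  thus ?thesis by simp
qed

lemma pact_diff: "b \<in> modB U A \<Longrightarrow> pact (p - q) b = pact p b \<otimes>\<^bsub>Bgrp\<^esub> inv\<^bsub>Bgrp\<^esub> pact q b"
  using pact_add[of b p "-q"] pact_uminus[of b q] by simp

lemma act_one_B: "\<sigma> \<in> carrier GG \<Longrightarrow> act \<sigma> \<one>\<^bsub>Bgrp\<^esub> = \<one>\<^bsub>Bgrp\<^esub>"
  using hom_one[OF act_hom BB.is_group BB.is_group] by simp

lemma pact_mult_b: "b \<in> modB U A \<Longrightarrow> c \<in> modB U A \<Longrightarrow>
   pact p (b \<otimes>\<^bsub>Bgrp\<^esub> c) = pact p b \<otimes>\<^bsub>Bgrp\<^esub> pact p c"
proof -
  assume b: "b \<in> modB U A" and c: "c \<in> modB U A"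
  have e: "\<And>\<sigma>. \<sigma> \<in> carrier GG \<Longrightarrow> act \<sigma> (b \<otimes>\<^bsub>Bgrp\<^esub> c) [^]\<^bsub>Bgrp\<^esub> (phi p \<sigma>) = act \<sigma> b [^]\<^bsub>Bgrp\<^esub> (phi p \<sigma>) \<otimes>\<^bsub>Bgrp\<^esub> act \<sigma> c [^]\<^bsub>Bgrp\<^esub> (phi p \<sigma>)"
    using act_closed b c by (simp add: act_mult BB.int_pow_distrib)
  have cc: "\<And>\<sigma>. \<sigma> \<in> carrier GG \<Longrightarrow> act \<sigma> b [^]\<^bsub>Bgrp\<^esub> (phi p \<sigma>) \<otimes>\<^bsub>Bgrp\<^esub> act \<sigma> c [^]\<^bsub>Bgrp\<^esub> (phi p \<sigma>) \<in> modB U A"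
    using actpow_closed b c BB.m_closed by simp
  have "pact p (b \<otimes>\<^bsub>Bgrp\<^esub> c) = finprod Bgrp (\<lambda>\<sigma>. act \<sigma> b [^]\<^bsub>Bgrp\<^esub> (phi p \<sigma>) \<otimes>\<^bsub>Bgrp\<^esub> act \<sigma> c [^]\<^bsub>Bgrp\<^esub> (phi p \<sigma>)) (carrier GG)"
    unfolding pact_def by (rule BB.finprod_cong') (simp_all add: e cc Pi_def)
  also have "\<dots> = pact p b \<otimes>\<^bsub>Bgrp\<^esub> pact p c" unfolding pact_def
    by (rule BB.finprod_multf) (simp_all add: Pi_def actpow_closed b c)
  finally show ?thesis .
qed

lemma pact_hom: "pact p \<in> hom Bgrp Bgrp"
  unfolding hom_def using pact_closed pact_mult_b by auto

lemma pact_one_b [simp]: "pact p \<one>\<^bsub>Bgrp\<^esub> = \<one>\<^bsub>Bgrp\<^esub>"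
  using hom_one[OF pact_hom BB.is_group BB.is_group] by simp

lemma pact_pow_b: "b \<in> modB U A \<Longrightarrow> pact p (b [^]\<^bsub>Bgrp\<^esub> (k::int)) = pact p b [^]\<^bsub>Bgrp\<^esub> k"
  using hom_int_pow[OF pact_hom _ BB.is_group BB.is_group] by simp

lemma pact_single_times: "b \<in> modB U A \<Longrightarrow>
   pact (Poly_Mapping.single m c * q) b = pact (Poly_Mapping.single m c) (pact q b)"
proof (induct q arbitrary: b rule: pm_induct)
  case zero thus ?case by simp
next
  case (add f a d)
  have "pact (Poly_Mapping.single m c * (f + Poly_Mapping.single a d)) b
      = pact (Poly_Mapping.single m c * f) b \<otimes>\<^bsub>Bgrp\<^esub> pact (Poly_Mapping.single (m + a) (c * d)) b"
    using add by (simp add: distrib_left mult_single pact_add)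
  also have "\<dots> = pact (Poly_Mapping.single m c) (pact f b) \<otimes>\<^bsub>Bgrp\<^esub> act (ev m \<otimes>\<^bsub>GG\<^esub> ev a) b [^]\<^bsub>Bgrp\<^esub> (c * d)"
    using add by (simp add: pact_single ev_add)
  also have "act (ev m \<otimes>\<^bsub>GG\<^esub> ev a) b [^]\<^bsub>Bgrp\<^esub> (c * d) = pact (Poly_Mapping.single m c) (pact (Poly_Mapping.single a d) b)"
  proof -
    have ab: "act (ev a) b \<in> modB U A" using add act_closed by simp
    have abd: "act (ev a) b [^]\<^bsub>Bgrp\<^esub> d \<in> modB U A" using ab BB.int_pow_closed by simp
    have "pact (Poly_Mapping.single m c) (pact (Poly_Mapping.single a d) b)
        = act (ev m) (act (ev a) b [^]\<^bsub>Bgrp\<^esub> d) [^]\<^bsub>Bgrp\<^esub> c"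
      using pact_single[OF add(2)] pact_single[OF abd] by simp
    also have "\<dots> = (act (ev m) (act (ev a) b) [^]\<^bsub>Bgrp\<^esub> d) [^]\<^bsub>Bgrp\<^esub> c"
      using act_pow[OF ev_closed ab] by simp
    also have "\<dots> = act (ev m \<otimes>\<^bsub>GG\<^esub> ev a) b [^]\<^bsub>Bgrp\<^esub> (c * d)"
      using act_comp[OF ev_closed ev_closed add(2)] act_closed[OF ev_closed ab]
      by (simp add: BB.int_pow_pow mult.commute)
    finally show ?thesis by simp
  qed
  also have "pact (Poly_Mapping.single m c) (pact f b) \<otimes>\<^bsub>Bgrp\<^esub> \<dots>
     = pact (Poly_Mapping.single m c) (pact (f + Poly_Mapping.single a d) b)"
    using add pact_closed by (simp add: pact_add pact_mult_b)
  finally show ?case .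
qed

lemma pact_times: "b \<in> modB U A \<Longrightarrow> pact (p * q) b = pact p (pact q b)"
proof (induct p arbitrary: b rule: pm_induct)
  case zero thus ?case by simp
next
  case (add f a d)
  thus ?case using pact_closed
    by (simp add: distrib_right pact_add pact_single_times)
qed

lemma eps_single_times: "eps (Poly_Mapping.single m c * q) = c * eps q"
  by (induct q rule: pm_induct) (simp_all add: distrib_left mult_single eps_add eps_single)

lemma eps_times: "eps (p * q) = eps p * eps q"
  by (induct p rule: pm_induct) (simp_all add: distrib_right eps_add eps_single_times eps_single)

lemma eps_one: "eps 1 = 1"
  by (simp add: eps_def)

lemma pact_tv: "\<xi> \<in> carrier GG \<Longrightarrow> b \<in> modB U A \<Longrightarrow> pact (tv \<xi>) b = act \<xi> b"
proof -
  assume x: "\<xi> \<in> carrier GG" and b: "b \<in> modB U A"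
  show ?thesis unfolding tv_def pact_single[OF b] ev_single[OF x] using act_closed[OF x b] by simp
qed

lemma pact_of_int: "b \<in> modB U A \<Longrightarrow> pact (of_int k) b = b [^]\<^bsub>Bgrp\<^esub> k"
proof -
  assume b: "b \<in> modB U A"
  have "(of_int k :: 'a pr) = Poly_Mapping.single 0 (of_int k)" by (rule single_of_int[symmetric])
  hence "(of_int k :: 'a pr) = Poly_Mapping.single 0 k" by simp
  thus ?thesis using pact_single[OF b, of 0 k] act_one[OF b] by simp
qed

lemma eps_tv: "eps (tv \<xi>) = 1" by (simp add: tv_def eps_single)

lemma eps_of_int: "eps (of_int k) = k"
proof -
  have "(of_int k :: 'a pr) = Poly_Mapping.single 0 (of_int k)" by (rule single_of_int[symmetric])
  hence "(of_int k :: 'a pr) = Poly_Mapping.single 0 k" by simp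
  thus ?thesis by (simp add: eps_single)
qed

end

context LB begin

lemma one_B_closed [simp]: "\<one>\<^bsub>Bgrp\<^esub> \<in> modB U A" using BB.one_closed by simp

lemma finprod_B_closed: "(\<And>i. i \<in> I \<Longrightarrow> f i \<in> modB U A) \<Longrightarrow> finprod Bgrp f I \<in> modB U A"
  using BB.finprod_closed[of f I] by (simp add: Pi_def)

lemma pact_sum_p: "finite I \<Longrightarrow> b \<in> modB U A \<Longrightarrow> pact (\<Sum>i\<in>I. p i) b = finprod Bgrp (\<lambda>i. pact (p i) b) I"
proof (induct I rule: finite_induct)
  case empty thus ?case by simp
next
  case (insert x F)
  thus ?case using pact_closed by (simp add: pact_add Pi_def)
qed

lemma pact_finprod_b: "finite I \<Longrightarrow> f \<in> I \<rightarrow> modB U A \<Longrightarrow>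
   pact p (finprod Bgrp f I) = finprod Bgrp (\<lambda>i. pact p (f i)) I"
  using finprod_hom[OF Bgrp_comm Bgrp_comm pact_hom] by simp

lemma cramer:
  fixes M :: "'a pr mat" and Xs :: "nat \<Rightarrow> 'a \<times> ('a set \<Rightarrow> int)"
  assumes M: "M \<in> carrier_mat n n" and Xs: "\<And>k. k < n \<Longrightarrow> Xs k \<in> modB U A"
    and rows: "\<And>j. j < n \<Longrightarrow> finprod Bgrp (\<lambda>k. pact (M $$ (j,k)) (Xs k)) {0..<n} = \<one>\<^bsub>Bgrp\<^esub>"
    and l: "l < n"
  shows "pact (det M) (Xs l) = \<one>\<^bsub>Bgrp\<^esub>"
proof -
  define C where "C = adj_mat M"
  have C: "C \<in> carrier_mat n n" and CM: "C * M = det M \<cdot>\<^sub>m 1\<^sub>m n" using adj_mat[OF M] by (auto simp: C_def)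
  have ent: "\<And>k. k < n \<Longrightarrow> (\<Sum>j\<in>{0..<n}. C $$ (l,j) * M $$ (j,k)) = (if l = k then det M else 0)"
  proof -
    fix k assume k: "k < n"
    have "(C * M) $$ (l,k) = (\<Sum>j\<in>{0..<n}. C $$ (l,j) * M $$ (j,k))"
      using C M l k by (simp add: index_mult_mat scalar_prod_def)
    moreover have "(C * M) $$ (l,k) = (if l = k then det M else 0)" using CM l k by simp
    ultimately show "(\<Sum>j\<in>{0..<n}. C $$ (l,j) * M $$ (j,k)) = (if l = k then det M else 0)" by simp
  qed
  have XsP: "Xs \<in> {0..<n} \<rightarrow> modB U A" using Xs by auto
  have "pact (det M) (Xs l) = finprod Bgrp (\<lambda>k. pact (if l = k then det M else 0) (Xs k)) {0..<n}"
  proof -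
    have "finprod Bgrp (\<lambda>k. pact (if l = k then det M else 0) (Xs k)) {0..<n}
        = finprod Bgrp (\<lambda>k. if l = k then pact (det M) (Xs k) else \<one>\<^bsub>Bgrp\<^esub>) {0..<n}"
      by (intro BB.finprod_cong') (auto simp: pact_closed Xs)
    also have "\<dots> = pact (det M) (Xs l)"
      using l by (intro BB.finprod_singleton) (auto simp: pact_closed Xs)
    finally show ?thesis by simp
  qed
  also have "\<dots> = finprod Bgrp (\<lambda>k. pact (\<Sum>j\<in>{0..<n}. C $$ (l,j) * M $$ (j,k)) (Xs k)) {0..<n}"
    by (intro BB.finprod_cong') (auto simp: ent pact_closed Xs)
  also have "\<dots> = finprod Bgrp (\<lambda>k. finprod Bgrp (\<lambda>j. pact (C $$ (l,j)) (pact (M $$ (j,k)) (Xs k))) {0..<n}) {0..<n}"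
    by (intro BB.finprod_cong') (auto simp: pact_sum_p pact_times Xs pact_closed intro!: finprod_B_closed)
  also have "\<dots> = finprod Bgrp (\<lambda>j. finprod Bgrp (\<lambda>k. pact (C $$ (l,j)) (pact (M $$ (j,k)) (Xs k))) {0..<n}) {0..<n}"
    by (intro BB.finprod_swap) (auto simp: pact_closed Xs)
  also have "\<dots> = finprod Bgrp (\<lambda>j. pact (C $$ (l,j)) (finprod Bgrp (\<lambda>k. pact (M $$ (j,k)) (Xs k)) {0..<n})) {0..<n}"
    by (intro BB.finprod_cong') (auto simp: pact_finprod_b pact_closed Xs intro!: finprod_B_closed)
  also have "\<dots> = finprod Bgrp (\<lambda>j. \<one>\<^bsub>Bgrp\<^esub>) {0..<n}"
    by (intro BB.finprod_cong') (auto simp: rows)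
  also have "\<dots> = \<one>\<^bsub>Bgrp\<^esub>" by simp
  finally show ?thesis .
qed

end

context LB begin

definition ind :: "'a set \<Rightarrow> 'a set \<Rightarrow> int" where "ind \<xi> \<rho> = (if \<rho> = \<xi> then 1 else 0)"

definition beta :: "'a \<Rightarrow> 'a \<times> ('a set \<Rightarrow> int)" where
  "beta u = (u \<otimes> inv (r (A #> u)), \<lambda>\<rho>. ind (A #> u) \<rho> - ind A \<rho>)"

lemma sum_ind: "\<xi> \<in> carrier GG \<Longrightarrow> (\<Sum>\<rho>\<in>carrier GG. ind \<xi> \<rho>) = 1"
  using finite_GG by (simp add: ind_def)

lemma beta_closed: "u \<in> carrier U \<Longrightarrow> beta u \<in> modB U A"
proof -
  assume u: "u \<in> carrier U"
  have s: "A #> u \<in> carrier GG" using coset_in[OF u] .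
  have "A #> u = A #> r (A #> u)" using r_coset[OF s] by simp
  hence f: "u \<otimes> inv (r (A #> u)) \<in> A" using coset_eq u r_in[OF s] by simp
  have "(\<Sum>\<rho>\<in>carrier GG. ind (A #> u) \<rho> - ind A \<rho>) = 0"
    using s by (simp add: sum_subtractf sum_ind)
  moreover have "\<forall>\<rho>. \<rho> \<notin> carrier GG \<longrightarrow> ind (A #> u) \<rho> - ind A \<rho> = 0"
    using s by (auto simp: ind_def)
  ultimately show ?thesis using f by (simp add: beta_def modB_iff aug_iff)
qed

lemma cc_one_right: "\<sigma> \<in> carrier GG \<Longrightarrow> cc \<sigma> A = \<one>"
  using r_in by (simp add: cc_def' r1)

lemma act_beta_fst: "\<sigma> \<in> carrier GG \<Longrightarrow> v \<in> carrier U \<Longrightarrow>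
   fst (act \<sigma> (beta v)) = cj (r \<sigma>) (v \<otimes> inv (r (A #> v))) \<otimes> cc \<sigma> (A #> v)"
proof -
  assume s: "\<sigma> \<in> carrier GG" and v: "v \<in> carrier U"
  define \<tau> where "\<tau> = A #> v"
  have t: "\<tau> \<in> carrier GG" using coset_in[OF v] by (simp add: \<tau>_def)
  have "finprod (subA U A) (\<lambda>\<rho>. cc \<sigma> \<rho> [^] (ind \<tau> \<rho> - ind A \<rho>)) (carrier GG) = cc \<sigma> \<tau> [^] (ind \<tau> \<tau> - ind A \<tau>)"
  proof (rule SA.finprod_single)
    show "finite (carrier GG)" by (rule finite_GG)
    show "\<tau> \<in> carrier GG" by (rule t)
    show "cc \<sigma> \<tau> [^] (ind \<tau> \<tau> - ind A \<tau>) \<in> A" using s t by (rule cc_pow_A)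
    fix y assume "y \<in> carrier GG" "y \<noteq> \<tau>"
    thus "cc \<sigma> y [^] (ind \<tau> y - ind A y) = \<one>" using s by (auto simp: ind_def cc_one_right)
  qed
  also have "\<dots> = cc \<sigma> \<tau>" using s t cc_A A_sub by (auto simp: ind_def cc_one_right subsetD)
  finally show ?thesis by (simp add: actB_fst beta_def \<tau>_def)
qed

lemma GG_solve: "\<sigma> \<in> carrier GG \<Longrightarrow> \<rho> \<in> carrier GG \<Longrightarrow> \<tau> \<in> carrier GG \<Longrightarrow>
   (inv\<^bsub>GG\<^esub> \<sigma> \<otimes>\<^bsub>GG\<^esub> \<rho> = \<tau>) \<longleftrightarrow> (\<rho> = \<sigma> \<otimes>\<^bsub>GG\<^esub> \<tau>)"
  using Q.inv_solve_left[of \<tau> \<sigma> \<rho>] by auto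

lemma beta_mult: "u \<in> carrier U \<Longrightarrow> v \<in> carrier U \<Longrightarrow>
   beta (u \<otimes> v) = beta u \<otimes>\<^bsub>Bgrp\<^esub> act (A #> u) (beta v)"
proof -
  assume u: "u \<in> carrier U" and v: "v \<in> carrier U"
  define \<sigma> where "\<sigma> = A #> u"
  define \<tau> where "\<tau> = A #> v"
  have s: "\<sigma> \<in> carrier GG" and t: "\<tau> \<in> carrier GG" using coset_in u v by (auto simp: \<sigma>_def \<tau>_def)
  have st: "\<sigma> \<otimes>\<^bsub>GG\<^esub> \<tau> \<in> carrier GG" using s t by simp
  have uv: "A #> (u \<otimes> v) = \<sigma> \<otimes>\<^bsub>GG\<^esub> \<tau>" using GG_mult[OF u v] by (simp add: \<sigma>_def \<tau>_def)
  note rs = r_in[OF s] r_in[OF t] r_in[OF st]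
  have F: "fst (beta (u \<otimes> v)) = fst (beta u \<otimes>\<^bsub>Bgrp\<^esub> act \<sigma> (beta v))"
    unfolding Bgrp_simps fst_conv act_beta_fst[OF s v]
    unfolding beta_def fst_conv uv \<sigma>_def[symmetric] \<tau>_def[symmetric] cj_def cc_def'
    using u v rs by (simp add: m_assoc cancel1 cancel2)
  have S: "snd (beta (u \<otimes> v)) = snd (beta u \<otimes>\<^bsub>Bgrp\<^esub> act \<sigma> (beta v))"
  proof
    fix \<rho>
    show "snd (beta (u \<otimes> v)) \<rho> = snd (beta u \<otimes>\<^bsub>Bgrp\<^esub> act \<sigma> (beta v)) \<rho>"
    proof (cases "\<rho> \<in> carrier GG")
      case True
      thus ?thesis using s t st
        by (simp add: Bgrp_simps actB_snd beta_def uv \<sigma>_def[symmetric] \<tau>_def[symmetric] ind_def GG_solve)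
    next
      case False
      thus ?thesis using s t st
        by (auto simp: Bgrp_simps actB_snd beta_def uv \<sigma>_def[symmetric] \<tau>_def[symmetric] ind_def)
    qed
  qed
  show ?thesis using F S by (simp add: prod_eq_iff \<sigma>_def)
qed

lemma beta_one: "beta \<one> = \<one>\<^bsub>Bgrp\<^esub>"
  using A_sub by (simp add: beta_def Bgrp_simps coset_mult_one r1 ind_def)

lemma beta_A: "a \<in> A \<Longrightarrow> beta a = (a, \<lambda>_. 0)"
  using A_sub rcos_const[OF is_group] by (simp add: beta_def r1 subsetD)

lemma beta_r: "\<sigma> \<in> carrier GG \<Longrightarrow> beta (r \<sigma>) = (\<one>, \<lambda>\<rho>. ind \<sigma> \<rho> - ind A \<rho>)"
  using r_in by (simp add: beta_def r_coset)

end

context LB begin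

lemma powB_nat: "b \<in> modB U A \<Longrightarrow> b [^]\<^bsub>Bgrp\<^esub> (n::nat) = (fst b [^] n, \<lambda>\<rho>. int n * snd b \<rho>)"
proof (induct n)
  case 0 thus ?case by (simp add: Bgrp_simps)
next
  case (Suc n) thus ?case using A_sub by (auto simp: Bgrp_simps modB_iff subsetD algebra_simps)
qed

lemma invB: "b \<in> modB U A \<Longrightarrow> inv\<^bsub>Bgrp\<^esub> b = (inv (fst b), \<lambda>\<rho>. - snd b \<rho>)"
proof -
  assume b: "b \<in> modB U A"
  have c: "(inv (fst b), \<lambda>\<rho>. - snd b \<rho>) \<in> modB U A"
    using b by (auto simp: modB_iff aug_iff sum_negf m_inv_closed)
  have "(inv (fst b), \<lambda>\<rho>. - snd b \<rho>) \<otimes>\<^bsub>Bgrp\<^esub> b = \<one>\<^bsub>Bgrp\<^esub>"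
    using b A_sub by (auto simp: Bgrp_simps modB_iff subsetD)
  thus ?thesis using BB.inv_equality[of "(inv (fst b), \<lambda>\<rho>. - snd b \<rho>)" b] b c by simp
qed

lemma powB_int: "b \<in> modB U A \<Longrightarrow> b [^]\<^bsub>Bgrp\<^esub> (k::int) = (fst b [^] k, \<lambda>\<rho>. k * snd b \<rho>)"
proof -
  assume b: "b \<in> modB U A"
  show ?thesis
  proof (cases "k < 0")
    case True
    define n where "n = nat (- k)"
    have kn: "k = - int n" using True by (simp add: n_def)
    have bn: "b [^]\<^bsub>Bgrp\<^esub> n \<in> modB U A" using BB.nat_pow_closed b by simp
    have "b [^]\<^bsub>Bgrp\<^esub> k = inv\<^bsub>Bgrp\<^esub> (b [^]\<^bsub>Bgrp\<^esub> n)"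
      unfolding kn using BB.int_pow_neg_int b by simp
    also have "\<dots> = (inv (fst (b [^]\<^bsub>Bgrp\<^esub> n)), \<lambda>\<rho>. - snd (b [^]\<^bsub>Bgrp\<^esub> n) \<rho>)"
      by (rule invB[OF bn])
    also have "\<dots> = (inv (fst b [^] n), \<lambda>\<rho>. - (int n * snd b \<rho>))"
      unfolding powB_nat[OF b] by simp
    also have "\<dots> = (fst b [^] k, \<lambda>\<rho>. k * snd b \<rho>)"
    proof -
      have "fst b \<in> carrier U" using b A_sub by (auto simp: modB_iff)
      hence "fst b [^] k = inv (fst b [^] n)" unfolding kn by (rule int_pow_neg_int)
      thus ?thesis unfolding kn by simp
    qed
    finally show ?thesis .
  next
    case False
    define n where "n = nat k"
    have kn: "k = int n" using False by (simp add: n_def)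
    show ?thesis unfolding kn int_pow_int powB_nat[OF b] by simp
  qed
qed

lemma finprod_B_pair: "finite I \<Longrightarrow> (\<And>i. i \<in> I \<Longrightarrow> f i \<in> modB U A) \<Longrightarrow>
  finprod Bgrp f I = (finprod (subA U A) (\<lambda>i. fst (f i)) I, \<lambda>\<rho>. \<Sum>i\<in>I. snd (f i) \<rho>)"
proof (induct I rule: finite_induct)
  case empty thus ?case by (simp add: Bgrp_simps)
next
  case (insert x F)
  have fx: "fst (f x) \<in> A" using insert by (simp add: modB_iff)
  have "finprod Bgrp f (insert x F) = f x \<otimes>\<^bsub>Bgrp\<^esub> finprod Bgrp f F"
    using insert by (intro BB.finprod_insert) (auto simp: Pi_def)
  also have "\<dots> = (finprod (subA U A) (\<lambda>i. fst (f i)) (insert x F), \<lambda>\<rho>. \<Sum>i\<in>insert x F. snd (f i) \<rho>)"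
    using insert fx by (simp add: Bgrp_simps SA.finprod_insert Pi_def modB_iff)
  finally show ?case .
qed

lemma mB_mult [simp]: "x \<in> modB U A \<Longrightarrow> y \<in> modB U A \<Longrightarrow> x \<otimes>\<^bsub>Bgrp\<^esub> y \<in> modB U A"
  using BB.m_closed by simp
lemma mB_inv [simp]: "x \<in> modB U A \<Longrightarrow> inv\<^bsub>Bgrp\<^esub> x \<in> modB U A"
  using BB.inv_closed by simp
lemma mB_pow [simp]: "x \<in> modB U A \<Longrightarrow> x [^]\<^bsub>Bgrp\<^esub> (k::int) \<in> modB U A"
  using BB.int_pow_closed by simp
declare pact_closed [simp]

definition us where "us = (SOME us. distinct us \<and> set us = carrier U)"

lemma us_prop: "distinct us \<and> set us = carrier U"
proof -
  have "\<exists>us. distinct us \<and> set us = carrier U" using finite_distinct_list[OF fin] by blast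
  thus ?thesis unfolding us_def by (rule someI_ex)
qed

lemma us: "distinct us" "set us = carrier U" using us_prop by auto

definition nn where "nn = length us"

lemma card_U: "card (carrier U) = nn"
proof -
  have "card (set us) = length us" using us(1) by (rule distinct_card)
  thus ?thesis using us(2) by (simp add: nn_def)
qed

lemma us_in: "k < nn \<Longrightarrow> us ! k \<in> carrier U"
proof -
  assume "k < nn"
  hence "us ! k \<in> set us" unfolding nn_def by (rule nth_mem)
  thus ?thesis using us(2) by simp
qed

lemma us_ex: "u \<in> carrier U \<Longrightarrow> \<exists>k<nn. us ! k = u"
proof -
  assume "u \<in> carrier U"
  hence "u \<in> set us" using us(2) by simp
  thus ?thesis unfolding nn_def by (simp add: in_set_conv_nth)
qed

definition Xs where "Xs k = beta (us ! k)"

lemma Xs_closed: "k < nn \<Longrightarrow> Xs k \<in> modB U A"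
  unfolding Xs_def using us_in beta_closed by simp

definition W where "W j = {b. \<exists>w. (\<forall>k\<in>{j..<nn}. eps (w k) = 0) \<and> b = finprod Bgrp (\<lambda>k. pact (w k) (Xs k)) {0..<nn}}"

lemma W_sub: "b \<in> W j \<Longrightarrow> b \<in> modB U A"
  unfolding W_def by (auto intro!: finprod_B_closed simp: Xs_closed)

lemma W_one: "\<one>\<^bsub>Bgrp\<^esub> \<in> W j"
  unfolding W_def by (rule CollectI, rule exI[of _ "\<lambda>_. 0"]) (simp add: BB.finprod_one_eqI)

lemma W_mult: "x \<in> W j \<Longrightarrow> y \<in> W j \<Longrightarrow> x \<otimes>\<^bsub>Bgrp\<^esub> y \<in> W j"
proof -
  assume "x \<in> W j" "y \<in> W j"
  then obtain w1 w2 where w1: "\<forall>k\<in>{j..<nn}. eps (w1 k) = 0" "x = finprod Bgrp (\<lambda>k. pact (w1 k) (Xs k)) {0..<nn}"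
    and w2: "\<forall>k\<in>{j..<nn}. eps (w2 k) = 0" "y = finprod Bgrp (\<lambda>k. pact (w2 k) (Xs k)) {0..<nn}"
    unfolding W_def by blast
  have "x \<otimes>\<^bsub>Bgrp\<^esub> y = finprod Bgrp (\<lambda>k. pact (w1 k) (Xs k) \<otimes>\<^bsub>Bgrp\<^esub> pact (w2 k) (Xs k)) {0..<nn}"
    unfolding w1(2) w2(2) by (rule BB.finprod_multf[symmetric]) (auto simp: Xs_closed pact_closed)
  also have "\<dots> = finprod Bgrp (\<lambda>k. pact (w1 k + w2 k) (Xs k)) {0..<nn}"
    by (intro BB.finprod_cong') (auto simp: Xs_closed pact_closed pact_add)
  finally show ?thesis unfolding W_def using w1(1) w2(1)
    by (intro CollectI exI[of _ "\<lambda>k. w1 k + w2 k"]) (simp add: eps_add)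
qed

lemma finprod_inv_B: "finite I \<Longrightarrow> (\<And>i. i \<in> I \<Longrightarrow> f i \<in> modB U A) \<Longrightarrow>
   inv\<^bsub>Bgrp\<^esub> (finprod Bgrp f I) = finprod Bgrp (\<lambda>i. inv\<^bsub>Bgrp\<^esub> (f i)) I"
proof -
  assume I: "finite I" and f: "\<And>i. i \<in> I \<Longrightarrow> f i \<in> modB U A"
  have h: "(\<lambda>x. inv\<^bsub>Bgrp\<^esub> x) \<in> hom Bgrp Bgrp" unfolding hom_def by (simp add: BB.inv_mult Pi_def)
  show ?thesis using finprod_hom[OF Bgrp_comm Bgrp_comm h, of f I] I f by (simp add: Pi_def)
qed

lemma eps_uminus: "eps (- p) = - eps p"
  using eps_add[of p "- p"] by simp

lemma W_inv: "x \<in> W j \<Longrightarrow> inv\<^bsub>Bgrp\<^esub> x \<in> W j"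
proof -
  assume "x \<in> W j"
  then obtain w1 where w1: "\<forall>k\<in>{j..<nn}. eps (w1 k) = 0" "x = finprod Bgrp (\<lambda>k. pact (w1 k) (Xs k)) {0..<nn}"
    unfolding W_def by blast
  have "inv\<^bsub>Bgrp\<^esub> x = finprod Bgrp (\<lambda>k. inv\<^bsub>Bgrp\<^esub> (pact (w1 k) (Xs k))) {0..<nn}"
    unfolding w1(2) by (rule finprod_inv_B) (auto simp: Xs_closed pact_closed)
  also have "\<dots> = finprod Bgrp (\<lambda>k. pact (- w1 k) (Xs k)) {0..<nn}"
    by (intro BB.finprod_cong') (auto simp: Xs_closed pact_closed pact_uminus)
  finally show ?thesis unfolding W_def using w1(1)
    by (intro CollectI exI[of _ "\<lambda>k. - w1 k"]) (simp add: eps_uminus)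
qed

lemma W_mono: "i \<le> j \<Longrightarrow> W i \<subseteq> W j"
proof
  fix b assume ij: "i \<le> j" and "b \<in> W i"
  then obtain w where w: "\<forall>k\<in>{i..<nn}. eps (w k) = 0" "b = finprod Bgrp (\<lambda>k. pact (w k) (Xs k)) {0..<nn}"
    unfolding W_def by blast
  have "\<forall>k\<in>{j..<nn}. eps (w k) = 0" using w(1) ij by simp
  thus "b \<in> W j" unfolding W_def using w(2) by blast
qed

lemma pact_one: "b \<in> modB U A \<Longrightarrow> pact 1 b = b"
  using pact_of_int[of b 1] by simp

lemma W_X: "i < nn \<Longrightarrow> i < j \<Longrightarrow> Xs i \<in> W j"
proof -
  assume i: "i < nn" "i < j"
  have "Xs i = finprod Bgrp (\<lambda>k. pact (if k = i then 1 else 0) (Xs k)) {0..<nn}"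
  proof -
    have "finprod Bgrp (\<lambda>k. pact (if k = i then 1 else 0) (Xs k)) {0..<nn}
        = finprod Bgrp (\<lambda>k. if i = k then Xs k else \<one>\<^bsub>Bgrp\<^esub>) {0..<nn}"
      by (intro BB.finprod_cong') (auto simp: pact_one Xs_closed)
    also have "\<dots> = Xs i" using i by (intro BB.finprod_singleton) (auto simp: Xs_closed)
    finally show ?thesis by simp
  qed
  thus ?thesis unfolding W_def using i by (intro CollectI exI[of _ "\<lambda>k. if k = i then 1 else 0"]) auto
qed

lemma W_pow_nat: "x \<in> W j \<Longrightarrow> x [^]\<^bsub>Bgrp\<^esub> (n::nat) \<in> W j"
  by (induct n) (auto simp: W_one W_mult)

lemma W_pow: "x \<in> W j \<Longrightarrow> x [^]\<^bsub>Bgrp\<^esub> (k::int) \<in> W j"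
proof -
  assume x: "x \<in> W j"
  show ?thesis
  proof (cases "k < 0")
    case True
    hence "x [^]\<^bsub>Bgrp\<^esub> k = inv\<^bsub>Bgrp\<^esub> (x [^]\<^bsub>Bgrp\<^esub> nat (- k))" by (simp only: int_pow_def2 if_True)
    thus ?thesis using W_inv W_pow_nat x by simp
  next
    case False
    hence "x [^]\<^bsub>Bgrp\<^esub> k = x [^]\<^bsub>Bgrp\<^esub> nat k" by (simp only: int_pow_def2 if_False)
    thus ?thesis using W_pow_nat x by simp
  qed
qed

lemma W_finprod: "finite I \<Longrightarrow> (\<And>i. i \<in> I \<Longrightarrow> f i \<in> W j) \<Longrightarrow> finprod Bgrp f I \<in> W j"
proof (induct I rule: finite_induct)
  case empty thus ?case by (simp add: W_one)
next
  case (insert x F)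
  have "finprod Bgrp f (insert x F) = f x \<otimes>\<^bsub>Bgrp\<^esub> finprod Bgrp f F"
    using insert by (intro BB.finprod_insert) (auto simp: Pi_def intro: W_sub)
  thus ?case using insert by (simp add: W_mult)
qed

lemma beta_W: "u \<in> carrier U \<Longrightarrow> beta u \<in> W nn"
proof -
  assume "u \<in> carrier U"
  then obtain k where k: "k < nn" "us ! k = u" using us_ex by blast
  show ?thesis using W_X[OF k(1) k(1)] k(2) by (simp add: Xs_def)
qed

lemma beta_r_pow: "\<sigma> \<in> carrier GG \<Longrightarrow> beta (r \<sigma>) [^]\<^bsub>Bgrp\<^esub> (k::int) = (\<one>, \<lambda>\<rho>. k * (ind \<sigma> \<rho> - ind A \<rho>))"
proof -
  assume s: "\<sigma> \<in> carrier GG"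
  have "beta (r \<sigma>) [^]\<^bsub>Bgrp\<^esub> k = (fst (beta (r \<sigma>)) [^] k, \<lambda>\<rho>. k * snd (beta (r \<sigma>)) \<rho>)"
    using beta_closed[OF r_in[OF s]] by (rule powB_int)
  thus ?thesis using s by (simp add: beta_r)
qed

lemma W_all: "b \<in> modB U A \<Longrightarrow> b \<in> W nn"
proof -
  assume b: "b \<in> modB U A"
  have a: "fst b \<in> A" and x0: "\<And>\<rho>. \<rho> \<notin> carrier GG \<Longrightarrow> snd b \<rho> = 0"
    and xs: "(\<Sum>\<rho>\<in>carrier GG. snd b \<rho>) = 0" using b by (auto simp: modB_iff aug_iff)
  have bc: "\<And>\<sigma>. \<sigma> \<in> carrier GG \<Longrightarrow> beta (r \<sigma>) [^]\<^bsub>Bgrp\<^esub> snd b \<sigma> \<in> modB U A"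
    using beta_closed r_in BB.int_pow_closed by simp
  have P: "finprod Bgrp (\<lambda>\<sigma>. beta (r \<sigma>) [^]\<^bsub>Bgrp\<^esub> snd b \<sigma>) (carrier GG) = (\<one>, snd b)"
  proof -
    have "finprod Bgrp (\<lambda>\<sigma>. beta (r \<sigma>) [^]\<^bsub>Bgrp\<^esub> snd b \<sigma>) (carrier GG)
       = (finprod (subA U A) (\<lambda>\<sigma>. fst (beta (r \<sigma>) [^]\<^bsub>Bgrp\<^esub> snd b \<sigma>)) (carrier GG),
          \<lambda>\<rho>. \<Sum>\<sigma>\<in>carrier GG. snd (beta (r \<sigma>) [^]\<^bsub>Bgrp\<^esub> snd b \<sigma>) \<rho>)"
      by (rule finprod_B_pair[OF finite_GG bc])
    also have "finprod (subA U A) (\<lambda>\<sigma>. fst (beta (r \<sigma>) [^]\<^bsub>Bgrp\<^esub> snd b \<sigma>)) (carrier GG) = \<one>"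
      by (rule SA.finprod_one_eqI) (simp add: beta_r_pow)
    also have "(\<lambda>\<rho>. \<Sum>\<sigma>\<in>carrier GG. snd (beta (r \<sigma>) [^]\<^bsub>Bgrp\<^esub> snd b \<sigma>) \<rho>)
             = (\<lambda>\<rho>. \<Sum>\<sigma>\<in>carrier GG. snd b \<sigma> * (ind \<sigma> \<rho> - ind A \<rho>))"
      by (intro ext sum.cong) (simp_all add: beta_r_pow)
    also have "\<dots> = snd b"
    proof
      fix \<rho>
      have "(\<Sum>\<sigma>\<in>carrier GG. snd b \<sigma> * (ind \<sigma> \<rho> - ind A \<rho>))
          = (\<Sum>\<sigma>\<in>carrier GG. snd b \<sigma> * ind \<sigma> \<rho>) - (\<Sum>\<sigma>\<in>carrier GG. snd b \<sigma>) * ind A \<rho>"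
        by (simp add: right_diff_distrib sum_subtractf sum_distrib_right)
      also have "(\<Sum>\<sigma>\<in>carrier GG. snd b \<sigma> * ind \<sigma> \<rho>) = snd b \<rho>"
      proof -
        have "(\<Sum>\<sigma>\<in>carrier GG. snd b \<sigma> * ind \<sigma> \<rho>) = (\<Sum>\<sigma>\<in>carrier GG. if \<rho> = \<sigma> then snd b \<sigma> else 0)"
          by (rule sum.cong) (simp_all add: ind_def)
        also have "\<dots> = (if \<rho> \<in> carrier GG then snd b \<rho> else 0)" using finite_GG by (rule sum.delta')
        also have "\<dots> = snd b \<rho>" using x0 by simp
        finally show ?thesis .
      qed
      finally show "(\<Sum>\<sigma>\<in>carrier GG. snd b \<sigma> * (ind \<sigma> \<rho> - ind A \<rho>)) = snd b \<rho>" using xs by simp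
    qed
    finally show ?thesis .
  qed
  have fU: "fst b \<in> carrier U" using a A_sub by auto
  have e: "b = beta (fst b) \<otimes>\<^bsub>Bgrp\<^esub> finprod Bgrp (\<lambda>\<sigma>. beta (r \<sigma>) [^]\<^bsub>Bgrp\<^esub> snd b \<sigma>) (carrier GG)"
    unfolding P beta_A[OF a] Bgrp_simps using fU by simp
  have m1: "beta (fst b) \<in> W nn" using fU by (rule beta_W)
  have m2: "finprod Bgrp (\<lambda>\<sigma>. beta (r \<sigma>) [^]\<^bsub>Bgrp\<^esub> snd b \<sigma>) (carrier GG) \<in> W nn"
    using finite_GG by (intro W_finprod W_pow beta_W r_in)
  show ?thesis by (subst e) (rule W_mult[OF m1 m2])
qed

lemma W_pact: "b \<in> modB U A \<Longrightarrow> eps p = 0 \<Longrightarrow> pact p b \<in> W 0"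
proof -
  assume b: "b \<in> modB U A" and p: "eps p = 0"
  obtain w where w: "b = finprod Bgrp (\<lambda>k. pact (w k) (Xs k)) {0..<nn}"
    using W_all[OF b] unfolding W_def by blast
  have "pact p b = finprod Bgrp (\<lambda>k. pact p (pact (w k) (Xs k))) {0..<nn}"
    unfolding w by (rule pact_finprod_b) (auto simp: Xs_closed pact_closed)
  also have "\<dots> = finprod Bgrp (\<lambda>k. pact (p * w k) (Xs k)) {0..<nn}"
    by (intro BB.finprod_cong') (auto simp: Xs_closed pact_closed pact_times)
  finally show ?thesis unfolding W_def using p
    by (intro CollectI exI[of _ "\<lambda>k. p * w k"]) (simp add: eps_times)
qed

lemma eps_diff: "eps (p - q) = eps p - eps q"
  using eps_add[of "p - q" q] by simp

lemma act_J: "\<sigma> \<in> carrier GG \<Longrightarrow> b \<in> modB U A \<Longrightarrow> act \<sigma> b \<otimes>\<^bsub>Bgrp\<^esub> inv\<^bsub>Bgrp\<^esub> b \<in> W 0"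
proof -
  assume s: "\<sigma> \<in> carrier GG" and b: "b \<in> modB U A"
  have "pact (tv \<sigma> - 1) b = pact (tv \<sigma>) b \<otimes>\<^bsub>Bgrp\<^esub> inv\<^bsub>Bgrp\<^esub> pact 1 b" by (rule pact_diff[OF b])
  also have "\<dots> = act \<sigma> b \<otimes>\<^bsub>Bgrp\<^esub> inv\<^bsub>Bgrp\<^esub> b" by (simp only: pact_tv[OF s b] pact_one[OF b])
  finally have e: "act \<sigma> b \<otimes>\<^bsub>Bgrp\<^esub> inv\<^bsub>Bgrp\<^esub> b = pact (tv \<sigma> - 1) b" by simp
  have "eps (tv \<sigma> - 1) = 0" by (simp add: eps_diff eps_tv eps_one)
  thus ?thesis unfolding e by (rule W_pact[OF b])
qed

end

context LB begin

lemma BBc1: "y \<in> modB U A \<Longrightarrow> z \<in> modB U A \<Longrightarrow> inv\<^bsub>Bgrp\<^esub> y \<otimes>\<^bsub>Bgrp\<^esub> (y \<otimes>\<^bsub>Bgrp\<^esub> z) = z"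
  by (simp add: BB.m_assoc[symmetric])
lemma BBc2: "y \<in> modB U A \<Longrightarrow> z \<in> modB U A \<Longrightarrow> y \<otimes>\<^bsub>Bgrp\<^esub> (inv\<^bsub>Bgrp\<^esub> y \<otimes>\<^bsub>Bgrp\<^esub> z) = z"
  by (simp add: BB.m_assoc[symmetric])

lemma alg1: "x \<in> modB U A \<Longrightarrow> y \<in> modB U A \<Longrightarrow> z \<in> modB U A \<Longrightarrow>
  (x \<otimes>\<^bsub>Bgrp\<^esub> inv\<^bsub>Bgrp\<^esub> y) \<otimes>\<^bsub>Bgrp\<^esub> (y \<otimes>\<^bsub>Bgrp\<^esub> inv\<^bsub>Bgrp\<^esub> z) = x \<otimes>\<^bsub>Bgrp\<^esub> inv\<^bsub>Bgrp\<^esub> z"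
  by (simp add: BB.m_assoc BBc1)

lemma alg2: "x \<in> modB U A \<Longrightarrow> y \<in> modB U A \<Longrightarrow>
  inv\<^bsub>Bgrp\<^esub> (x \<otimes>\<^bsub>Bgrp\<^esub> inv\<^bsub>Bgrp\<^esub> y) = y \<otimes>\<^bsub>Bgrp\<^esub> inv\<^bsub>Bgrp\<^esub> x"
  by (simp add: BB.inv_mult BB.m_comm)

lemma alg3: "x \<in> modB U A \<Longrightarrow> x' \<in> modB U A \<Longrightarrow> y \<in> modB U A \<Longrightarrow> y' \<in> modB U A \<Longrightarrow>
  (x \<otimes>\<^bsub>Bgrp\<^esub> x') \<otimes>\<^bsub>Bgrp\<^esub> inv\<^bsub>Bgrp\<^esub> (y \<otimes>\<^bsub>Bgrp\<^esub> y') = (x \<otimes>\<^bsub>Bgrp\<^esub> inv\<^bsub>Bgrp\<^esub> y) \<otimes>\<^bsub>Bgrp\<^esub> (x' \<otimes>\<^bsub>Bgrp\<^esub> inv\<^bsub>Bgrp\<^esub> y')"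
  by (simp add: BB.inv_mult BB.m_ac)

lemma alg4: "x \<in> modB U A \<Longrightarrow> y \<in> modB U A \<Longrightarrow> x = (x \<otimes>\<^bsub>Bgrp\<^esub> inv\<^bsub>Bgrp\<^esub> y) \<otimes>\<^bsub>Bgrp\<^esub> y"
  by (simp add: BB.m_assoc)

lemma alg5: "a \<in> modB U A \<Longrightarrow> b \<in> modB U A \<Longrightarrow>
   ((a \<otimes>\<^bsub>Bgrp\<^esub> b) \<otimes>\<^bsub>Bgrp\<^esub> inv\<^bsub>Bgrp\<^esub> a) \<otimes>\<^bsub>Bgrp\<^esub> inv\<^bsub>Bgrp\<^esub> b = \<one>\<^bsub>Bgrp\<^esub>"
proof -
  assume a: "a \<in> modB U A" and b: "b \<in> modB U A"
  have "(a \<otimes>\<^bsub>Bgrp\<^esub> b) \<otimes>\<^bsub>Bgrp\<^esub> inv\<^bsub>Bgrp\<^esub> a = a \<otimes>\<^bsub>Bgrp\<^esub> (b \<otimes>\<^bsub>Bgrp\<^esub> inv\<^bsub>Bgrp\<^esub> a)"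
    using a b by (simp add: BB.m_assoc)
  also have "\<dots> = a \<otimes>\<^bsub>Bgrp\<^esub> (inv\<^bsub>Bgrp\<^esub> a \<otimes>\<^bsub>Bgrp\<^esub> b)" using a b BB.m_comm[of b "inv\<^bsub>Bgrp\<^esub> a"] by simp
  also have "\<dots> = b" using a b by (simp add: BBc2)
  finally show ?thesis using b by simp
qed

definition jeq where "jeq x y \<longleftrightarrow> x \<in> modB U A \<and> y \<in> modB U A \<and> x \<otimes>\<^bsub>Bgrp\<^esub> inv\<^bsub>Bgrp\<^esub> y \<in> W 0"

lemma jeq_refl: "x \<in> modB U A \<Longrightarrow> jeq x x"
  unfolding jeq_def by (simp add: W_one)

lemma jeq_sym: "jeq x y \<Longrightarrow> jeq y x"
  unfolding jeq_def using alg2 W_inv by metis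

lemma jeq_trans: "jeq x y \<Longrightarrow> jeq y z \<Longrightarrow> jeq x z"
  unfolding jeq_def using alg1 W_mult by metis

lemma jeq_mult: "jeq x y \<Longrightarrow> jeq x' y' \<Longrightarrow> jeq (x \<otimes>\<^bsub>Bgrp\<^esub> x') (y \<otimes>\<^bsub>Bgrp\<^esub> y')"
proof -
  assume "jeq x y" "jeq x' y'"
  thus ?thesis unfolding jeq_def using alg3[of x x' y y'] W_mult by simp
qed

lemma jeq_W: "jeq x y \<Longrightarrow> y \<in> W j \<Longrightarrow> x \<in> W j"
proof -
  assume j: "jeq x y" and y: "y \<in> W j"
  have "x \<otimes>\<^bsub>Bgrp\<^esub> inv\<^bsub>Bgrp\<^esub> y \<in> W j" using j W_mono[of 0 j] unfolding jeq_def by auto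
  hence "(x \<otimes>\<^bsub>Bgrp\<^esub> inv\<^bsub>Bgrp\<^esub> y) \<otimes>\<^bsub>Bgrp\<^esub> y \<in> W j" using y W_mult by simp
  thus ?thesis using alg4[of x y] j unfolding jeq_def by simp
qed

lemma beta_jeq: "u \<in> carrier U \<Longrightarrow> v \<in> carrier U \<Longrightarrow> jeq (beta (u \<otimes> v)) (beta u \<otimes>\<^bsub>Bgrp\<^esub> beta v)"
proof -
  assume u: "u \<in> carrier U" and v: "v \<in> carrier U"
  have bu: "beta u \<in> modB U A" and bv: "beta v \<in> modB U A" using u v beta_closed by auto
  have s: "A #> u \<in> carrier GG" using coset_in[OF u] .
  have av: "act (A #> u) (beta v) \<in> modB U A" using act_closed[OF s bv] .
  have "beta (u \<otimes> v) \<otimes>\<^bsub>Bgrp\<^esub> inv\<^bsub>Bgrp\<^esub> (beta u \<otimes>\<^bsub>Bgrp\<^esub> beta v)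
      = (beta u \<otimes>\<^bsub>Bgrp\<^esub> inv\<^bsub>Bgrp\<^esub> beta u) \<otimes>\<^bsub>Bgrp\<^esub> (act (A #> u) (beta v) \<otimes>\<^bsub>Bgrp\<^esub> inv\<^bsub>Bgrp\<^esub> beta v)"
    unfolding beta_mult[OF u v] by (rule alg3[OF bu av bu bv])
  also have "\<dots> = act (A #> u) (beta v) \<otimes>\<^bsub>Bgrp\<^esub> inv\<^bsub>Bgrp\<^esub> beta v" using bu av bv by simp
  finally show ?thesis unfolding jeq_def using act_J[OF s bv] u v beta_closed bu bv by simp
qed

lemma jeq_inv: "jeq x y \<Longrightarrow> jeq (inv\<^bsub>Bgrp\<^esub> x) (inv\<^bsub>Bgrp\<^esub> y)"
proof -
  assume j: "jeq x y"
  hence xy: "x \<in> modB U A" "y \<in> modB U A" unfolding jeq_def by auto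
  have "inv\<^bsub>Bgrp\<^esub> x \<otimes>\<^bsub>Bgrp\<^esub> inv\<^bsub>Bgrp\<^esub> (inv\<^bsub>Bgrp\<^esub> y) = inv\<^bsub>Bgrp\<^esub> (x \<otimes>\<^bsub>Bgrp\<^esub> inv\<^bsub>Bgrp\<^esub> y)"
    using xy by (simp add: BB.inv_mult)
  thus ?thesis using j W_inv unfolding jeq_def by simp
qed

lemma beta_inv_jeq: "u \<in> carrier U \<Longrightarrow> jeq (beta (inv u)) (inv\<^bsub>Bgrp\<^esub> beta u)"
proof -
  assume u: "u \<in> carrier U"
  have bu: "beta u \<in> modB U A" and bi: "beta (inv u) \<in> modB U A" using u beta_closed by auto
  have "jeq (beta (inv u \<otimes> u)) (beta (inv u) \<otimes>\<^bsub>Bgrp\<^esub> beta u)" using u by (intro beta_jeq) auto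
  hence "jeq (beta (inv u) \<otimes>\<^bsub>Bgrp\<^esub> beta u) \<one>\<^bsub>Bgrp\<^esub>" using u by (simp add: beta_one jeq_sym)
  hence "jeq ((beta (inv u) \<otimes>\<^bsub>Bgrp\<^esub> beta u) \<otimes>\<^bsub>Bgrp\<^esub> inv\<^bsub>Bgrp\<^esub> beta u) (\<one>\<^bsub>Bgrp\<^esub> \<otimes>\<^bsub>Bgrp\<^esub> inv\<^bsub>Bgrp\<^esub> beta u)"
    using jeq_refl[of "inv\<^bsub>Bgrp\<^esub> beta u"] bu by (intro jeq_mult) auto
  thus ?thesis using bu bi by (simp add: BB.m_assoc)
qed

lemma beta_pow_jeq: "u \<in> carrier U \<Longrightarrow> jeq (beta (u [^] (n::nat))) (beta u [^]\<^bsub>Bgrp\<^esub> n)"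
proof (induct n)
  case 0 thus ?case by (simp add: beta_one jeq_refl)
next
  case (Suc n)
  have "jeq (beta (u [^] n \<otimes> u)) (beta (u [^] n) \<otimes>\<^bsub>Bgrp\<^esub> beta u)" using Suc by (intro beta_jeq) auto
  moreover have "jeq (beta (u [^] n) \<otimes>\<^bsub>Bgrp\<^esub> beta u) (beta u [^]\<^bsub>Bgrp\<^esub> n \<otimes>\<^bsub>Bgrp\<^esub> beta u)"
    using Suc beta_closed by (intro jeq_mult jeq_refl) auto
  ultimately show ?case by (simp add: jeq_trans[of _ "beta (u [^] n) \<otimes>\<^bsub>Bgrp\<^esub> beta u"])
qed

definition L where "L j = {u \<in> carrier U. beta u \<in> W j}"

lemma L_subgroup: "subgroup (L j) U"
proof (rule subgroupI)
  show "L j \<subseteq> carrier U" unfolding L_def by auto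
  show "L j \<noteq> {}" unfolding L_def using beta_one W_one by force
next
  fix a assume "a \<in> L j"
  hence a: "a \<in> carrier U" "beta a \<in> W j" unfolding L_def by auto
  have "beta (inv a) \<in> W j" using jeq_W[OF beta_inv_jeq[OF a(1)] W_inv[OF a(2)]] .
  thus "inv a \<in> L j" unfolding L_def using a by simp
next
  fix a b assume "a \<in> L j" "b \<in> L j"
  hence a: "a \<in> carrier U" "beta a \<in> W j" and b: "b \<in> carrier U" "beta b \<in> W j" unfolding L_def by auto
  have "beta (a \<otimes> b) \<in> W j" using jeq_W[OF beta_jeq[OF a(1) b(1)] W_mult[OF a(2) b(2)]] .
  thus "a \<otimes> b \<in> L j" unfolding L_def using a b by simp
qed

lemma derived_L0: "derived U (carrier U) \<subseteq> L 0"
  unfolding derived_def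
proof (rule generate_subgroup_incl[OF _ L_subgroup])
  show "derived_set U (carrier U) \<subseteq> L 0"
  proof
    fix c assume "c \<in> derived_set U (carrier U)"
    then obtain g h where gh: "g \<in> carrier U" "h \<in> carrier U" "c = g \<otimes> h \<otimes> inv g \<otimes> inv h" by blast
    have bg: "beta g \<in> modB U A" and bh: "beta h \<in> modB U A" using gh beta_closed by auto
    have j1: "jeq (beta (g \<otimes> h)) (beta g \<otimes>\<^bsub>Bgrp\<^esub> beta h)" using gh by (intro beta_jeq)
    have j2: "jeq (beta (g \<otimes> h \<otimes> inv g)) (beta (g \<otimes> h) \<otimes>\<^bsub>Bgrp\<^esub> beta (inv g))" using gh by (intro beta_jeq) auto
    have j3: "jeq (beta (g \<otimes> h \<otimes> inv g \<otimes> inv h)) (beta (g \<otimes> h \<otimes> inv g) \<otimes>\<^bsub>Bgrp\<^esub> beta (inv h))" using gh by (intro beta_jeq) auto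
    have j4: "jeq (beta (g \<otimes> h) \<otimes>\<^bsub>Bgrp\<^esub> beta (inv g)) ((beta g \<otimes>\<^bsub>Bgrp\<^esub> beta h) \<otimes>\<^bsub>Bgrp\<^esub> inv\<^bsub>Bgrp\<^esub> beta g)"
      using j1 beta_inv_jeq gh by (intro jeq_mult) auto
    have j5: "jeq (beta (g \<otimes> h \<otimes> inv g)) ((beta g \<otimes>\<^bsub>Bgrp\<^esub> beta h) \<otimes>\<^bsub>Bgrp\<^esub> inv\<^bsub>Bgrp\<^esub> beta g)"
      using j2 j4 by (rule jeq_trans)
    have j6: "jeq (beta (g \<otimes> h \<otimes> inv g) \<otimes>\<^bsub>Bgrp\<^esub> beta (inv h)) (((beta g \<otimes>\<^bsub>Bgrp\<^esub> beta h) \<otimes>\<^bsub>Bgrp\<^esub> inv\<^bsub>Bgrp\<^esub> beta g) \<otimes>\<^bsub>Bgrp\<^esub> inv\<^bsub>Bgrp\<^esub> beta h)"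
      using j5 beta_inv_jeq gh by (intro jeq_mult) auto
    have "jeq (beta c) \<one>\<^bsub>Bgrp\<^esub>" using jeq_trans[OF j3 j6] alg5[OF bg bh] gh(3) by simp
    hence "beta c \<in> W 0" using jeq_W W_one by blast
    thus "c \<in> L 0" unfolding L_def using gh by simp
  qed
qed

end

context LB begin

lemma normal_der:
  assumes S: "subgroup S U" and dS: "derived U (carrier U) \<subseteq> S" and x: "x \<in> carrier U" and s: "s \<in> S"
  shows "x \<otimes> s \<otimes> inv x \<in> S"
proof -
  have sU: "s \<in> carrier U" using s subgroup.subset[OF S] by auto
  have "x \<otimes> s \<otimes> inv x \<otimes> inv s \<in> derived U (carrier U)"
    using x sU unfolding derived_def by (intro generate.incl) blast
  hence c: "x \<otimes> s \<otimes> inv x \<otimes> inv s \<in> S" using dS by auto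
  have "x \<otimes> s \<otimes> inv x = (x \<otimes> s \<otimes> inv x \<otimes> inv s) \<otimes> s" using x sU by (simp add: m_assoc)
  have "(x \<otimes> s \<otimes> inv x \<otimes> inv s) \<otimes> s \<in> S" using subgroup.m_closed[OF S c s] .
  thus ?thesis using \<open>x \<otimes> s \<otimes> inv x = (x \<otimes> s \<otimes> inv x \<otimes> inv s) \<otimes> s\<close> by simp
qed

lemma step:
  fixes f :: nat
  assumes S: "subgroup S U" and dS: "derived U (carrier U) \<subseteq> S" and u: "u \<in> carrier U"
    and fdef: "f = (LEAST f::nat. 0 < f \<and> u [^] f \<in> S)"
  shows "0 < f" "u [^] f \<in> S" "card (generate U (S \<union> {u})) = f * card S"
proof -
  interpret S: subgroup S U by (rule S)
  have sub: "S \<subseteq> carrier U" by (rule S.subset)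
  have ex: "\<exists>f::nat. 0 < f \<and> u [^] f \<in> S"
    using ord_ge_1[OF fin u] pow_ord_eq_1[OF u] by (intro exI[of _ "ord u"]) auto
  have fS: "0 < f \<and> u [^] f \<in> S" unfolding fdef by (rule LeastI_ex[OF ex])
  thus f0: "0 < f" and uf: "u [^] f \<in> S" by auto
  have least: "\<And>i. 0 < i \<Longrightarrow> i < f \<Longrightarrow> u [^] i \<notin> S"
    unfolding fdef using not_less_Least by blast
  have upow: "\<And>n::nat. u [^] n \<in> carrier U" using u by simp
  have ufq: "\<And>q::nat. u [^] (f * q) \<in> S"
  proof -
    fix q :: nat
    have "u [^] (f * q) = (u [^] f) [^] q" using u by (simp add: nat_pow_pow)
    moreover have "(u [^] f) [^] q \<in> S"
      using subgroup_int_pow_closed[OF S uf, of "int q"] by (simp add: int_pow_int)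
    ultimately show "u [^] (f * q) \<in> S" by simp
  qed
  define T' where "T' = (\<lambda>(s,i). s \<otimes> u [^] (i::nat)) ` (S \<times> {..<f})"
  have red: "\<And>s n. s \<in> S \<Longrightarrow> s \<otimes> u [^] (n::nat) \<in> T'"
  proof -
    fix s n assume s: "s \<in> S"
    have sU: "s \<in> carrier U" using s sub by auto
    have "u [^] n = u [^] (f * (n div f) + n mod f)" by simp
    also have "\<dots> = u [^] (f * (n div f)) \<otimes> u [^] (n mod f)" using u by (simp add: nat_pow_mult)
    finally have "s \<otimes> u [^] n = (s \<otimes> u [^] (f * (n div f))) \<otimes> u [^] (n mod f)"
      using u sU by (simp add: m_assoc)
    moreover have "s \<otimes> u [^] (f * (n div f)) \<in> S" using s ufq by (simp add: S.m_closed)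
    moreover have "n mod f < f" using f0 by simp
    ultimately show "s \<otimes> u [^] n \<in> T'" unfolding T'_def by force
  qed
  have T'sub: "subgroup T' U"
  proof (rule subgroupI)
    show "T' \<subseteq> carrier U" unfolding T'_def using sub u by auto
    have "\<one> \<in> S" by (rule S.one_closed)
    hence "(\<lambda>(s,i). s \<otimes> u [^] (i::nat)) (\<one>, 0) \<in> T'" unfolding T'_def using f0 by (intro imageI) auto
    thus "T' \<noteq> {}" by blast
  next
    fix a assume "a \<in> T'"
    then obtain s i where si: "s \<in> S" "a = s \<otimes> u [^] (i::nat)" unfolding T'_def by auto
    have sU: "s \<in> carrier U" using si sub by auto
    define m where "m = ord u * i - i"
    have "u [^] m \<otimes> u [^] i = u [^] (ord u * i)"
      using ord_ge_1[OF fin u] u by (simp add: nat_pow_mult m_def add.commute mult_le_mono1)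
    also have "\<dots> = \<one>" using u by (simp add: nat_pow_pow[symmetric])
    finally have im: "inv (u [^] i) = u [^] m" using u by (simp add: inv_equality)
    have "inv a = inv (u [^] i) \<otimes> inv s" using si sU u by (simp add: inv_mult_group)
    also have "\<dots> = (inv (u [^] i) \<otimes> inv s \<otimes> inv (inv (u [^] i))) \<otimes> inv (u [^] i)"
      using sU u by (simp add: m_assoc)
    also have "\<dots> = (inv (u [^] i) \<otimes> inv s \<otimes> inv (inv (u [^] i))) \<otimes> u [^] m" using im by simp
    finally have e: "inv a = (inv (u [^] i) \<otimes> inv s \<otimes> inv (inv (u [^] i))) \<otimes> u [^] m" .
    have "inv (u [^] i) \<otimes> inv s \<otimes> inv (inv (u [^] i)) \<in> S"
      using normal_der[OF S dS, of "inv (u [^] i)" "inv s"] si u by (simp add: S.m_inv_closed)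
    thus "inv a \<in> T'" unfolding e by (rule red)
  next
    fix a b assume "a \<in> T'" "b \<in> T'"
    then obtain s i s' j where si: "s \<in> S" "a = s \<otimes> u [^] (i::nat)" and sj: "s' \<in> S" "b = s' \<otimes> u [^] (j::nat)"
      unfolding T'_def by auto
    have sU: "s \<in> carrier U" "s' \<in> carrier U" using si sj sub by auto
    have "a \<otimes> b = (s \<otimes> (u [^] i \<otimes> s' \<otimes> inv (u [^] i))) \<otimes> u [^] (i + j)"
      using si sj sU u by (simp add: m_assoc nat_pow_mult[symmetric] cancel1)
    moreover have "s \<otimes> (u [^] i \<otimes> s' \<otimes> inv (u [^] i)) \<in> S"
      using normal_der[OF S dS, of "u [^] i" s'] si sj u by (simp add: S.m_closed)
    ultimately show "a \<otimes> b \<in> T'" using red by simp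
  qed
  have T'eq: "T' = generate U (S \<union> {u})"
  proof
    show "generate U (S \<union> {u}) \<subseteq> T'"
    proof (rule generate_subgroup_incl[OF _ T'sub])
      have "S \<subseteq> T'"
      proof
        fix s assume s: "s \<in> S"
        have "s \<otimes> u [^] (0::nat) \<in> T'" using s by (rule red)
        thus "s \<in> T'" using s sub by auto
      qed
      moreover have "u \<in> T'"
      proof (cases "f = 1")
        case True
        hence "u [^] (1::nat) \<in> S" using uf by simp
        hence uS: "u \<in> S" using u by (simp add: nat_pow_def)
        have "u \<otimes> u [^] (0::nat) \<in> T'" using uS by (rule red)
        thus ?thesis using u by simp
      next
        case False
        hence "1 < f" using f0 by simp
        hence "(\<lambda>(s,i). s \<otimes> u [^] (i::nat)) (\<one>, 1) \<in> T'" unfolding T'_def by (intro imageI) auto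
        hence "\<one> \<otimes> u [^] (1::nat) \<in> T'" by simp
        thus ?thesis using u by (simp add: nat_pow_def)
      qed
      ultimately show "S \<union> {u} \<subseteq> T'" by auto
    qed
  next
    have SuU: "S \<union> {u} \<subseteq> carrier U" using sub u by blast
    have gs: "subgroup (generate U (S \<union> {u})) U" by (rule generate_is_subgroup[OF SuU])
    have ug: "u \<in> generate U (S \<union> {u})" by (rule generate.incl) simp
    show "T' \<subseteq> generate U (S \<union> {u})"
    proof
      fix a assume "a \<in> T'"
      then obtain s i where si: "s \<in> S" "a = s \<otimes> u [^] (i::nat)" unfolding T'_def by auto
      have sg: "s \<in> generate U (S \<union> {u})" by (rule generate.incl) (simp add: si(1))
      have "u [^] (int i) \<in> generate U (S \<union> {u})" by (rule subgroup_int_pow_closed[OF gs ug])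
      hence ig: "u [^] i \<in> generate U (S \<union> {u})" by (simp only: int_pow_int)
      show "a \<in> generate U (S \<union> {u})" unfolding si(2) by (rule subgroup.m_closed[OF gs sg ig])
    qed
  qed
  have aux: "\<And>s s' i j. s \<in> S \<Longrightarrow> s' \<in> S \<Longrightarrow> i \<le> j \<Longrightarrow> j < f \<Longrightarrow>
       s \<otimes> u [^] (i::nat) = s' \<otimes> u [^] (j::nat) \<Longrightarrow> i = j \<and> s = s'"
  proof -
    fix s s' i j assume s: "s \<in> S" and s': "s' \<in> S" and ij: "i \<le> j" "j < f"
      and e: "s \<otimes> u [^] (i::nat) = s' \<otimes> u [^] (j::nat)"
    have sU: "s \<in> carrier U" "s' \<in> carrier U" using s s' sub by auto
    have "u [^] i \<otimes> u [^] (j - i) = u [^] (i + (j - i))" by (rule nat_pow_mult[OF u])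
    hence "u [^] j = u [^] i \<otimes> u [^] (j - i)" using ij by simp
    hence "s \<otimes> u [^] i = (s' \<otimes> u [^] (j - i)) \<otimes> u [^] i"
      using e sU u by (simp add: m_assoc nat_pow_comm)
    hence e2: "s = s' \<otimes> u [^] (j - i)" using sU u r_cancel[of "u [^] i" s "s' \<otimes> u [^] (j - i)"] by simp
    hence "u [^] (j - i) = inv s' \<otimes> s" using sU u by (simp add: m_assoc[symmetric])
    hence "u [^] (j - i) \<in> S" using s s' by (simp add: S.m_closed S.m_inv_closed)
    hence "j - i = 0" using least[of "j - i"] ij by (cases "j - i = 0") auto
    hence "i = j" using ij by simp
    thus "i = j \<and> s = s'" using e2 sU by simp
  qed
  have inj: "inj_on (\<lambda>(s,i). s \<otimes> u [^] (i::nat)) (S \<times> {..<f})"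
  proof (rule inj_onI, clarify)
    fix s i s' j assume "s \<in> S" "i < f" "s' \<in> S" "j < f" "s \<otimes> u [^] (i::nat) = s' \<otimes> u [^] (j::nat)"
    thus "s = s' \<and> i = j" using aux[of s s' i j] aux[of s' s j i] by (cases "i \<le> j") auto
  qed
  have finS: "finite S" using sub fin finite_subset by auto
  have "card T' = card (S \<times> {..<f})" unfolding T'_def using inj by (rule card_image)
  also have "\<dots> = card S * f" by (simp add: card_cartesian_product)
  finally show "card (generate U (S \<union> {u})) = f * card S" using T'eq by simp
qed

end

context LB begin

primrec Sq :: "nat \<Rightarrow> 'a set" where
  "Sq 0 = L 0"
| "Sq (Suc j) = generate U (Sq j \<union> {us ! j})"

definition ff where "ff j = (LEAST f::nat. 0 < f \<and> (us ! j) [^] f \<in> Sq j)"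

lemma Sq_props: "j \<le> nn \<Longrightarrow> subgroup (Sq j) U \<and> derived U (carrier U) \<subseteq> Sq j"
proof (induct j)
  case 0 thus ?case using L_subgroup derived_L0 by simp
next
  case (Suc j)
  hence IH: "subgroup (Sq j) U" "derived U (carrier U) \<subseteq> Sq j" and j: "j < nn" by auto
  have sub: "Sq j \<union> {us ! j} \<subseteq> carrier U" using subgroup.subset[OF IH(1)] us_in[OF j] by blast
  have "Sq j \<subseteq> Sq (Suc j)" by (auto intro: generate.incl)
  thus ?case using generate_is_subgroup[OF sub] IH(2) by auto
qed

lemma Sq_step: "j < nn \<Longrightarrow> 0 < ff j \<and> (us ! j) [^] ff j \<in> Sq j \<and> card (Sq (Suc j)) = ff j * card (Sq j)"
proof -
  assume j: "j < nn"
  have P: "subgroup (Sq j) U" "derived U (carrier U) \<subseteq> Sq j" using Sq_props[of j] j by auto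
  note st = step[OF P(1) P(2) us_in[OF j] ff_def]
  thus ?thesis by simp
qed

lemma Sq_mono1: "Sq j \<subseteq> Sq (Suc j)"
  by (auto intro: generate.incl)

lemma Sq_mono: "i \<le> j \<Longrightarrow> Sq i \<subseteq> Sq j"
proof (induct j)
  case 0 thus ?case by simp
next
  case (Suc j) thus ?case using Sq_mono1[of j] by (cases "i = Suc j") auto
qed

lemma card_Sq: "j \<le> nn \<Longrightarrow> card (Sq j) = (\<Prod>i<j. ff i) * card (L 0)"
proof (induct j)
  case 0 thus ?case by simp
next
  case (Suc j)
  hence j: "j < nn" by simp
  thus ?case using Suc Sq_step[OF j] by simp
qed

lemma Sq_nn: "Sq nn = carrier U"
proof
  show "Sq nn \<subseteq> carrier U" using Sq_props[of nn] subgroup.subset by auto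
  show "carrier U \<subseteq> Sq nn"
  proof
    fix u assume "u \<in> carrier U"
    then obtain k where k: "k < nn" "us ! k = u" using us_ex by blast
    have "u \<in> Sq (Suc k)" using k(2) by (auto intro: generate.incl)
    thus "u \<in> Sq nn" using Sq_mono[of "Suc k" nn] k(1) by auto
  qed
qed

lemma L_mono: "i \<le> j \<Longrightarrow> L i \<subseteq> L j"
  unfolding L_def using W_mono by blast

lemma Sq_L: "j \<le> nn \<Longrightarrow> i \<le> j \<Longrightarrow> Sq i \<subseteq> L j"
proof (induct i)
  case 0 thus ?case using L_mono by simp
next
  case (Suc i)
  hence i: "i < nn" "i < j" and IH: "Sq i \<subseteq> L j" by auto
  have "us ! i \<in> L j" unfolding L_def using us_in[OF i(1)] W_X[OF i] by (simp add: Xs_def)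
  hence "Sq i \<union> {us ! i} \<subseteq> L j" using IH by blast
  thus ?case using generate_subgroup_incl[OF _ L_subgroup] by simp
qed

lemma row_W: "j < nn \<Longrightarrow> Xs j [^]\<^bsub>Bgrp\<^esub> (ff j) \<in> W j"
proof -
  assume j: "j < nn"
  have "(us ! j) [^] ff j \<in> Sq j" using Sq_step[OF j] by simp
  hence "(us ! j) [^] ff j \<in> L j" using Sq_L[of j j] j by auto
  hence b: "beta ((us ! j) [^] ff j) \<in> W j" unfolding L_def by simp
  have "jeq (beta (us ! j) [^]\<^bsub>Bgrp\<^esub> ff j) (beta ((us ! j) [^] ff j))"
    using beta_pow_jeq[OF us_in[OF j]] by (rule jeq_sym)
  thus ?thesis using jeq_W b unfolding Xs_def by blast
qed

lemma card_U_prod: "card (carrier U) = (\<Prod>i<nn. ff i) * card (L 0)"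
  using card_Sq[of nn] Sq_nn by simp

end

context LB begin

lemma mB_pow_nat [simp]: "x \<in> modB U A \<Longrightarrow> x [^]\<^bsub>Bgrp\<^esub> (n::nat) \<in> modB U A"
  using BB.nat_pow_closed by simp

definition wsel where
  "wsel j = (SOME w. (\<forall>k\<in>{j..<nn}. eps (w k) = 0) \<and>
      Xs j [^]\<^bsub>Bgrp\<^esub> (ff j) = finprod Bgrp (\<lambda>k. pact (w k) (Xs k)) {0..<nn})"

lemma wsel: "j < nn \<Longrightarrow> (\<forall>k\<in>{j..<nn}. eps (wsel j k) = 0) \<and>
      Xs j [^]\<^bsub>Bgrp\<^esub> (ff j) = finprod Bgrp (\<lambda>k. pact (wsel j k) (Xs k)) {0..<nn}"
proof -
  assume j: "j < nn"
  have "\<exists>w. (\<forall>k\<in>{j..<nn}. eps (w k) = 0) \<and>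
      Xs j [^]\<^bsub>Bgrp\<^esub> (ff j) = finprod Bgrp (\<lambda>k. pact (w k) (Xs k)) {0..<nn}"
    using row_W[OF j] unfolding W_def by blast
  thus ?thesis unfolding wsel_def by (rule someI_ex)
qed

definition MM :: "'a pr mat" where
  "MM = mat nn nn (\<lambda>(j,k). (if k = j then of_nat (ff j) else 0) - wsel j k)"

lemma MM_carrier: "MM \<in> carrier_mat nn nn" unfolding MM_def by simp

lemma pact_of_nat: "b \<in> modB U A \<Longrightarrow> pact (of_nat n) b = b [^]\<^bsub>Bgrp\<^esub> n"
  using pact_of_int[of b "int n"] by (simp add: int_pow_int)

lemma MM_row: "j < nn \<Longrightarrow> finprod Bgrp (\<lambda>k. pact (MM $$ (j,k)) (Xs k)) {0..<nn} = \<one>\<^bsub>Bgrp\<^esub>"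
proof -
  assume j: "j < nn"
  define R where "R = finprod Bgrp (\<lambda>k. pact (MM $$ (j,k)) (Xs k)) {0..<nn}"
  define V where "V = finprod Bgrp (\<lambda>k. pact (wsel j k) (Xs k)) {0..<nn}"
  have RB: "R \<in> modB U A" unfolding R_def by (auto intro!: finprod_B_closed simp: Xs_closed)
  have VB: "V \<in> modB U A" unfolding V_def by (auto intro!: finprod_B_closed simp: Xs_closed)
  have "R \<otimes>\<^bsub>Bgrp\<^esub> V = finprod Bgrp (\<lambda>k. pact (MM $$ (j,k)) (Xs k) \<otimes>\<^bsub>Bgrp\<^esub> pact (wsel j k) (Xs k)) {0..<nn}"
    unfolding R_def V_def by (rule BB.finprod_multf[symmetric]) (auto simp: Xs_closed)
  also have "\<dots> = finprod Bgrp (\<lambda>k. pact (if k = j then of_nat (ff j) else 0) (Xs k)) {0..<nn}"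
  proof (rule BB.finprod_cong')
    fix k assume k: "k \<in> {0..<nn}"
    have "MM $$ (j,k) + wsel j k = (if k = j then of_nat (ff j) else 0)" using j k by (simp add: MM_def)
    thus "pact (MM $$ (j,k)) (Xs k) \<otimes>\<^bsub>Bgrp\<^esub> pact (wsel j k) (Xs k) = pact (if k = j then of_nat (ff j) else 0) (Xs k)"
      using k pact_add[OF Xs_closed, of k "MM $$ (j,k)" "wsel j k"] by simp
  qed (auto simp: Pi_def Xs_closed)
  also have "\<dots> = finprod Bgrp (\<lambda>k. if j = k then Xs k [^]\<^bsub>Bgrp\<^esub> ff k else \<one>\<^bsub>Bgrp\<^esub>) {0..<nn}"
    by (intro BB.finprod_cong') (auto simp: Xs_closed pact_of_nat Pi_def)
  also have "\<dots> = Xs j [^]\<^bsub>Bgrp\<^esub> ff j" using j by (intro BB.finprod_singleton) (auto simp: Xs_closed)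
  also have "\<dots> = V" using wsel[OF j] by (simp add: V_def)
  finally have "R \<otimes>\<^bsub>Bgrp\<^esub> V = \<one>\<^bsub>Bgrp\<^esub> \<otimes>\<^bsub>Bgrp\<^esub> V" using VB by simp
  hence "R = \<one>\<^bsub>Bgrp\<^esub>" using BB.r_cancel[of V R "\<one>\<^bsub>Bgrp\<^esub>"] RB VB by simp
  thus ?thesis by (simp add: R_def)
qed

lemma det_kills: "k < nn \<Longrightarrow> pact (det MM) (Xs k) = \<one>\<^bsub>Bgrp\<^esub>"
  by (rule cramer[OF MM_carrier Xs_closed MM_row])

lemma eps_hom: "comm_ring_hom eps"
  by unfold_locales (simp_all add: eps_add eps_times eps_one)

lemma eps_det: "eps (det MM) = int (\<Prod>i<nn. ff i)"
proof -
  interpret eh: comm_ring_hom eps by (rule eps_hom)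
  have "eps (det MM) = det (map_mat eps MM)" by simp
  also have "\<dots> = prod_list (diag_mat (map_mat eps MM))"
  proof (rule det_lower_triangular[of nn])
    fix i j assume ij: "i < j" "j < nn"
    hence "eps (wsel i j) = 0" using wsel[of i] by auto
    thus "map_mat eps MM $$ (i,j) = 0" using ij MM_carrier by (simp add: MM_def eps_diff eps_uminus)
  qed (simp add: MM_carrier)
  also have "\<dots> = (\<Prod>i = 0..<nn. map_mat eps MM $$ (i,i))" using MM_carrier by (simp add: prod_list_diag_prod)
  also have "\<dots> = (\<Prod>i = 0..<nn. int (ff i))"
  proof (rule prod.cong)
    fix i assume i: "i \<in> {0..<nn}"
    hence "eps (wsel i i) = 0" using wsel[of i] by auto
    thus "map_mat eps MM $$ (i,i) = int (ff i)" using i MM_carrier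
      by (simp add: MM_def eps_diff eps_of_int[of "int (ff i)", simplified])
  qed simp
  finally show ?thesis by (simp add: atLeast0LessThan)
qed

end

context LB begin

lemma snd_pact: "b \<in> modB U A \<Longrightarrow> snd (pact p b) \<rho> = (\<Sum>\<sigma>\<in>carrier GG. phi p \<sigma> * snd (act \<sigma> b) \<rho>)"
proof -
  assume b: "b \<in> modB U A"
  have "pact p b = (finprod (subA U A) (\<lambda>\<sigma>. fst (act \<sigma> b [^]\<^bsub>Bgrp\<^esub> phi p \<sigma>)) (carrier GG),
          \<lambda>\<rho>. \<Sum>\<sigma>\<in>carrier GG. snd (act \<sigma> b [^]\<^bsub>Bgrp\<^esub> phi p \<sigma>) \<rho>)"
    unfolding pact_def by (rule finprod_B_pair[OF finite_GG]) (simp add: actpow_closed b)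
  hence "snd (pact p b) \<rho> = (\<Sum>\<sigma>\<in>carrier GG. snd (act \<sigma> b [^]\<^bsub>Bgrp\<^esub> phi p \<sigma>) \<rho>)" by simp
  also have "\<dots> = (\<Sum>\<sigma>\<in>carrier GG. phi p \<sigma> * snd (act \<sigma> b) \<rho>)"
    by (rule sum.cong) (simp_all add: powB_int act_closed b)
  finally show ?thesis .
qed

abbreviation "DD \<equiv> det MM"

lemma GG_inv_eq: "\<tau> \<in> carrier GG \<Longrightarrow> \<sigma> \<in> carrier GG \<Longrightarrow> (inv\<^bsub>GG\<^esub> \<tau> = inv\<^bsub>GG\<^esub> \<sigma>) = (\<tau> = \<sigma>)"
proof
  assume t: "\<tau> \<in> carrier GG" and s: "\<sigma> \<in> carrier GG" and e: "inv\<^bsub>GG\<^esub> \<tau> = inv\<^bsub>GG\<^esub> \<sigma>"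
  have "inv\<^bsub>GG\<^esub> (inv\<^bsub>GG\<^esub> \<tau>) = inv\<^bsub>GG\<^esub> (inv\<^bsub>GG\<^esub> \<sigma>)" using e by simp
  thus "\<tau> = \<sigma>" using t s by (simp only: Q.inv_inv)
qed simp

lemma GG_inv_A: "\<tau> \<in> carrier GG \<Longrightarrow> (inv\<^bsub>GG\<^esub> \<tau> = A) = (\<tau> = A)"
  using GG_inv_eq[of \<tau> A] by simp

lemma phi_const: "\<sigma> \<in> carrier GG \<Longrightarrow> phi DD \<sigma> = phi DD A"
proof -
  assume s: "\<sigma> \<in> carrier GG"
  define \<xi> where "\<xi> = inv\<^bsub>GG\<^esub> \<sigma>"
  have x: "\<xi> \<in> carrier GG" using s by (simp add: \<xi>_def)
  obtain k where k: "k < nn" "us ! k = r \<xi>" using us_ex[OF r_in[OF x]] by blast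
  have bx: "beta (r \<xi>) \<in> modB U A" using beta_closed[OF r_in[OF x]] .
  have "pact DD (beta (r \<xi>)) = \<one>\<^bsub>Bgrp\<^esub>" using det_kills[OF k(1)] k(2) by (simp add: Xs_def)
  hence "snd (pact DD (beta (r \<xi>))) A = 0" by (simp add: Bgrp_simps)
  hence "(\<Sum>\<tau>\<in>carrier GG. phi DD \<tau> * snd (act \<tau> (beta (r \<xi>))) A) = 0" using snd_pact[OF bx] by simp
  moreover have fo: "\<And>\<tau>. \<tau> \<in> carrier GG \<Longrightarrow> snd (act \<tau> (beta (r \<xi>))) A
       = (if \<tau> = \<sigma> then 1 else 0) - (if \<tau> = A then 1 else 0)"
  proof -
    fix \<tau> assume t: "\<tau> \<in> carrier GG"
    have "snd (act \<tau> (beta (r \<xi>))) A = ind \<xi> (inv\<^bsub>GG\<^esub> \<tau>) - ind A (inv\<^bsub>GG\<^esub> \<tau>)"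
      using t x by (simp add: actB_snd beta_r)
    also have "ind \<xi> (inv\<^bsub>GG\<^esub> \<tau>) = (if \<tau> = \<sigma> then 1 else 0)"
      unfolding ind_def \<xi>_def using GG_inv_eq[OF t s] by simp
    also have "ind A (inv\<^bsub>GG\<^esub> \<tau>) = (if \<tau> = A then 1 else 0)"
      unfolding ind_def using GG_inv_A[OF t] by simp
    finally show "snd (act \<tau> (beta (r \<xi>))) A = (if \<tau> = \<sigma> then 1 else 0) - (if \<tau> = A then 1 else 0)" .
  qed
  ultimately have "(\<Sum>\<tau>\<in>carrier GG. phi DD \<tau> * ((if \<tau> = \<sigma> then 1 else 0) - (if \<tau> = A then 1 else 0))) = 0"
    by simp
  moreover have "(\<Sum>\<tau>\<in>carrier GG. phi DD \<tau> * ((if \<tau> = \<sigma> then 1 else 0) - (if \<tau> = A then 1 else 0)))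
      = (\<Sum>\<tau>\<in>carrier GG. (if \<tau> = \<sigma> then phi DD \<tau> else 0) - (if \<tau> = A then phi DD \<tau> else 0))"
    by (rule sum.cong) auto
  moreover have "\<dots> = (\<Sum>\<tau>\<in>carrier GG. (if \<tau> = \<sigma> then phi DD \<tau> else 0)) - (\<Sum>\<tau>\<in>carrier GG. (if \<tau> = A then phi DD \<tau> else 0))"
    by (rule sum_subtractf)
  moreover have "(\<Sum>\<tau>\<in>carrier GG. (if \<tau> = \<sigma> then phi DD \<tau> else 0)) = phi DD \<sigma>"
    using s finite_GG by (simp add: sum.delta)
  moreover have "(\<Sum>\<tau>\<in>carrier GG. (if \<tau> = A then phi DD \<tau> else 0)) = phi DD A"
    using finite_GG by (simp add: sum.delta)
  ultimately show ?thesis by simp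
qed

lemma traceB_eq: "b \<in> modB U A \<Longrightarrow> traceB U A r b = finprod Bgrp (\<lambda>\<sigma>. act \<sigma> b) (carrier GG)"
  using finprod_B_pair[OF finite_GG, of "\<lambda>\<sigma>. act \<sigma> b"] act_closed by (simp add: traceB_def)

lemma traceB_closed: "b \<in> modB U A \<Longrightarrow> traceB U A r b \<in> modB U A"
  by (simp add: traceB_eq act_closed finprod_B_closed)

lemma pact_D_trace: "b \<in> modB U A \<Longrightarrow> pact DD b = traceB U A r b [^]\<^bsub>Bgrp\<^esub> (phi DD A)"
proof -
  assume b: "b \<in> modB U A"
  have "pact DD b = finprod Bgrp (\<lambda>\<sigma>. act \<sigma> b [^]\<^bsub>Bgrp\<^esub> phi DD A) (carrier GG)"
    unfolding pact_def
  proof (rule BB.finprod_cong')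
    fix \<sigma> assume s: "\<sigma> \<in> carrier GG"
    show "act \<sigma> b [^]\<^bsub>Bgrp\<^esub> phi DD \<sigma> = act \<sigma> b [^]\<^bsub>Bgrp\<^esub> phi DD A" by (simp only: phi_const[OF s])
  qed (simp_all add: act_closed b Pi_def)
  also have "\<dots> = finprod Bgrp (\<lambda>\<sigma>. act \<sigma> b) (carrier GG) [^]\<^bsub>Bgrp\<^esub> phi DD A"
    by (rule BB.finprod_int_pow[symmetric]) (simp_all add: Pi_def act_closed b finite_GG)
  finally show ?thesis by (simp add: traceB_eq b)
qed

lemma eps_D: "eps DD = phi DD A * int (card (carrier GG))"
proof -
  have "eps DD = (\<Sum>\<sigma>\<in>carrier GG. phi DD A)" unfolding eps_phi
    by (rule sum.cong) (simp, rule phi_const)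
  thus ?thesis by simp
qed

lemma pact_D_zero: "b \<in> modB U A \<Longrightarrow> pact DD b = \<one>\<^bsub>Bgrp\<^esub>"
proof -
  assume b: "b \<in> modB U A"
  obtain w where w: "b = finprod Bgrp (\<lambda>k. pact (w k) (Xs k)) {0..<nn}"
    using W_all[OF b] unfolding W_def by blast
  have "pact DD b = finprod Bgrp (\<lambda>k. pact DD (pact (w k) (Xs k))) {0..<nn}"
    unfolding w by (rule pact_finprod_b) (auto simp: Xs_closed)
  also have "\<dots> = finprod Bgrp (\<lambda>k. pact (w k) (pact DD (Xs k))) {0..<nn}"
  proof (rule BB.finprod_cong')
    fix k assume k: "k \<in> {0..<nn}"
    have "pact DD (pact (w k) (Xs k)) = pact (DD * w k) (Xs k)" using k by (simp add: pact_times Xs_closed)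
    also have "\<dots> = pact (w k * DD) (Xs k)" by (simp add: mult.commute)
    also have "\<dots> = pact (w k) (pact DD (Xs k))" using k by (simp add: pact_times Xs_closed)
    finally show "pact DD (pact (w k) (Xs k)) = pact (w k) (pact DD (Xs k))" .
  qed (auto simp: Pi_def Xs_closed)
  also have "\<dots> = finprod Bgrp (\<lambda>k. \<one>\<^bsub>Bgrp\<^esub>) {0..<nn}"
    by (intro BB.finprod_cong') (simp_all add: det_kills Pi_def)
  finally show ?thesis by simp
qed

lemma smulB_pow: "b \<in> modB U A \<Longrightarrow> smulB U k b = b [^]\<^bsub>Bgrp\<^esub> k"
  by (simp add: smulB_def powB_int)

lemma zeroB_one: "zeroB U = \<one>\<^bsub>Bgrp\<^esub>"
  by (simp add: zeroB_def Bgrp_simps)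

lemma main1: "b \<in> modB U A \<Longrightarrow>
   smulB U (int (card A div card (derived U (carrier U)))) (traceB U A r b) = zeroB U"
proof -
  assume b: "b \<in> modB U A"
  define c where "c = phi DD A"
  define D' where "D' = derived U (carrier U)"
  have cG: "c * int (card (carrier GG)) = int (\<Prod>i<nn. ff i)" using eps_D eps_det by (simp add: c_def)
  have lag: "card (carrier GG) * card A = card (carrier U)"
    using lagrange[OF subgroup_axioms] by (simp add: FactGroup_def Coset.order_def)
  have cU: "card (carrier U) = (\<Prod>i<nn. ff i) * card (L 0)" by (rule card_U_prod)
  have Gpos: "card (carrier GG) > 0" using finite_GG GG_A by (auto simp: card_gt_0_iff)
  have "int (card (carrier GG)) * int (card A) = c * int (card (carrier GG)) * int (card (L 0))"
  proof -
    have "int (card (carrier GG)) * int (card A) = int (card (carrier U))" using lag by (metis of_nat_mult)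
    also have "\<dots> = int (\<Prod>i<nn. ff i) * int (card (L 0))" using cU by simp
    also have "\<dots> = c * int (card (carrier GG)) * int (card (L 0))" using cG by simp
    finally show ?thesis .
  qed
  hence cA: "int (card A) = c * int (card (L 0))" using Gpos by (simp add: mult.assoc mult.left_commute)
  have D'sub: "subgroup D' U" unfolding D'_def by (rule derived_is_subgroup) simp
  have D'L: "D' \<subseteq> L 0" unfolding D'_def by (rule derived_L0)
  have L0sub: "subgroup (L 0) U" by (rule L_subgroup)
  have "subgroup D' (U\<lparr>carrier := L 0\<rparr>)" by (rule subgroup_incl[OF D'sub L0sub D'L])
  moreover have "group (U\<lparr>carrier := L 0\<rparr>)" by (rule subgroup_imp_group[OF L0sub])
  ultimately have "card (rcosets\<^bsub>U\<lparr>carrier := L 0\<rparr>\<^esub> D') * card D' = Coset.order (U\<lparr>carrier := L 0\<rparr>)"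
    using group.lagrange by blast
  hence "card D' dvd card (L 0)" unfolding Coset.order_def by (simp add: dvd_def) (metis mult.commute)
  then obtain q where q: "card (L 0) = card D' * q" by (auto simp: dvd_def)
  have D'pos: "card D' > 0"
  proof -
    have "finite D'" using subgroup.subset[OF D'sub] fin finite_subset by auto
    moreover have "\<one> \<in> D'" using subgroup.one_closed[OF D'sub] .
    ultimately show ?thesis by (auto simp: card_gt_0_iff)
  qed
  have c0: "c \<ge> 0"
  proof -
    have "c * int (card (carrier GG)) \<ge> 0" by (subst cG) (rule of_nat_0_le_iff)
    thus ?thesis using Gpos by (simp add: zero_le_mult_iff)
  qed
  have "int (card A) = c * int q * int (card D')" using cA q by (simp add: mult.commute mult.left_commute)
  hence "int (card A div card D') = c * int q"
  proof -
    assume e: "int (card A) = c * int q * int (card D')"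
    have "int (card A) = int (nat c * q * card D')" using e c0 by simp
    hence "card A = nat c * q * card D'" by (simp only: of_nat_eq_iff)
    hence "card A div card D' = nat c * q" using D'pos by simp
    thus ?thesis using c0 by simp
  qed
  hence m: "int (card A div card D') = c * int q" .
  have tb: "traceB U A r b \<in> modB U A" using traceB_closed[OF b] .
  have "smulB U (int (card A div card D')) (traceB U A r b) = traceB U A r b [^]\<^bsub>Bgrp\<^esub> (c * int q)"
    using smulB_pow[OF tb] m by simp
  also have "\<dots> = (traceB U A r b [^]\<^bsub>Bgrp\<^esub> c) [^]\<^bsub>Bgrp\<^esub> (int q)" using tb by (simp add: BB.int_pow_pow)
  also have "\<dots> = \<one>\<^bsub>Bgrp\<^esub>"
  proof -
    have "traceB U A r b [^]\<^bsub>Bgrp\<^esub> c = \<one>\<^bsub>Bgrp\<^esub>"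
      using pact_D_trace[OF b] pact_D_zero[OF b] by (simp add: c_def)
    thus ?thesis by simp
  qed
  finally show ?thesis by (simp add: D'_def zeroB_one)
qed

lemma transfer_trace: "u \<in> carrier U \<Longrightarrow> fst (traceB U A r (beta u)) = transfer U A r u"
proof -
  assume u: "u \<in> carrier U"
  define \<tau> where "\<tau> = A #> u"
  have t: "\<tau> \<in> carrier GG" using coset_in[OF u] by (simp add: \<tau>_def)
  have "fst (traceB U A r (beta u)) = finprod (subA U A) (\<lambda>\<sigma>. fst (act \<sigma> (beta u))) (carrier GG)"
    by (simp add: traceB_def)
  also have "\<dots> = finprod (subA U A) (\<lambda>\<sigma>. r \<sigma> \<otimes> u \<otimes> inv (r (\<sigma> <#> (A #> u)))) (carrier GG)"
  proof (rule SA.finprod_cong')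
    fix \<sigma> assume s: "\<sigma> \<in> carrier GG"
    have st: "\<sigma> \<otimes>\<^bsub>GG\<^esub> \<tau> \<in> carrier GG" using s t by simp
    have "fst (act \<sigma> (beta u)) = cj (r \<sigma>) (u \<otimes> inv (r \<tau>)) \<otimes> cc \<sigma> \<tau>"
      using act_beta_fst[OF s u] by (simp add: \<tau>_def)
    also have "\<dots> = r \<sigma> \<otimes> u \<otimes> inv (r (\<sigma> \<otimes>\<^bsub>GG\<^esub> \<tau>))"
      unfolding cj_def cc_def' using r_in[OF s] r_in[OF t] r_in[OF st] u
      by (simp add: m_assoc cancel1 cancel2)
    finally show "fst (act \<sigma> (beta u)) = r \<sigma> \<otimes> u \<otimes> inv (r (\<sigma> <#> (A #> u)))"
      by (simp add: \<tau>_def mult_FactGroup)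
  next
    show "(\<lambda>\<sigma>. r \<sigma> \<otimes> u \<otimes> inv (r (\<sigma> <#> (A #> u)))) \<in> carrier GG \<rightarrow> A"
    proof
      fix \<sigma> assume s: "\<sigma> \<in> carrier GG"
      have "fst (act \<sigma> (beta u)) \<in> A" using act_closed[OF s beta_closed[OF u]] by (simp add: modB_iff)
      moreover have "fst (act \<sigma> (beta u)) = r \<sigma> \<otimes> u \<otimes> inv (r (\<sigma> <#> (A #> u)))"
      proof -
        have st: "\<sigma> \<otimes>\<^bsub>GG\<^esub> \<tau> \<in> carrier GG" using s t by simp
        have "fst (act \<sigma> (beta u)) = cj (r \<sigma>) (u \<otimes> inv (r \<tau>)) \<otimes> cc \<sigma> \<tau>"
          using act_beta_fst[OF s u] by (simp add: \<tau>_def)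
        also have "\<dots> = r \<sigma> \<otimes> u \<otimes> inv (r (\<sigma> \<otimes>\<^bsub>GG\<^esub> \<tau>))"
          unfolding cj_def cc_def' using r_in[OF s] r_in[OF t] r_in[OF st] u
          by (simp add: m_assoc cancel1 cancel2)
        finally show ?thesis by (simp add: \<tau>_def mult_FactGroup)
      qed
      ultimately show "r \<sigma> \<otimes> u \<otimes> inv (r (\<sigma> <#> (A #> u))) \<in> A" by simp
    qed
  qed simp
  also have "\<dots> = transfer U A r u" by (simp add: transfer_def)
  finally show ?thesis .
qed

lemma main2: "A = derived U (carrier U) \<Longrightarrow> u \<in> carrier U \<Longrightarrow> transfer U A r u = \<one>"
proof -
  assume AD: "A = derived U (carrier U)" and u: "u \<in> carrier U"
  have Apos: "card A > 0"
  proof -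
    have "finite A" using A_sub fin finite_subset by auto
    thus ?thesis using SA.one_closed by (auto simp: card_gt_0_iff)
  qed
  have bu: "beta u \<in> modB U A" using beta_closed[OF u] .
  have tb: "traceB U A r (beta u) \<in> modB U A" using traceB_closed[OF bu] .
  have "smulB U (int (card A div card (derived U (carrier U)))) (traceB U A r (beta u)) = zeroB U"
    by (rule main1[OF bu])
  hence "smulB U 1 (traceB U A r (beta u)) = zeroB U" using AD Apos by simp
  hence "fst (traceB U A r (beta u)) [^] (1::int) = \<one>" by (simp add: smulB_def zeroB_def)
  moreover have "fst (traceB U A r (beta u)) \<in> carrier U" using tb A_sub by (auto simp: modB_iff)
  ultimately have "fst (traceB U A r (beta u)) = \<one>" by simp
  thus ?thesis using transfer_trace[OF u] by simp
qed

end

theorem lemmaB: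
  fixes U :: "'a monoid" and A :: "'a set" and r :: "'a set \<Rightarrow> 'a"
  assumes "group U" and "finite (carrier U)"
    and "A \<lhd> U"
    and "\<forall>x\<in>A. \<forall>y\<in>A. x \<otimes>\<^bsub>U\<^esub> y = y \<otimes>\<^bsub>U\<^esub> x"
    and "derived U (carrier U) \<subseteq> A"
    and "\<forall>\<sigma>\<in>carrier (U Mod A). r \<sigma> \<in> \<sigma>"
    and "r A = \<one>\<^bsub>U\<^esub>"
  shows "(\<forall>b\<in>modB U A.
            smulB U (int (card A div card (derived U (carrier U)))) (traceB U A r b) = zeroB U)
         \<and> (A = derived U (carrier U) \<longrightarrow> (\<forall>u\<in>carrier U. transfer U A r u = \<one>\<^bsub>U\<^esub>))"
proof -
  interpret LB U A r by (rule LB.intro) (fact assms)+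
  show ?thesis using main1 main2 by blast
qed


end
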